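(* Let $A$ be a unital semi-simple commutative Banach algebra, $U$ an automorphism of $A$, and $w \in A$. Let $T = wU$ and let $\check{T}$ be the associated weighted composition operator on $\check{A}$. Then $\sigma_r(\check{T}) := \sigma(\check{T}) \setminus \sigma_{a.p.}(\check{T}) \subset \sigma(T)$, where $\sigma_{a.p.}(\check{T})$ is the approximate point spectrum of $\check{T}$.
   Context: $A$ is a unital commutative semi-simple Banach algebra with maximal ideal space $\mathfrak{M}_A$ and Shilov boundary $\partial A$. For $f\in A$, $\check f$ is the restriction of the Gelfand transform $\hat f$ to $\partial A$; $\check A$ is the closure of $\{\check f: f\in A\}$ in $C(\partial A)$ with sup norm. The automorphism $U$ induces a homeomorphism $\varphi$ of $\mathfrak{M}_A$ by $\widehat{Uf}(m)=\hat f(\varphi(m))$, with $\varphi(\partial A)=\partial A$. $T=wU$ means $Tf=w\cdot Uf$; $\check T$ is the operator on $\check A$ given by $(\check Tg)(t)=\check w(t)g(\varphi(t))$, $t\in\partial A$. *)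

theory Defs
  imports "HOL-Analysis.Analysis"
begin

text \<open>A complex unital commutative Banach algebra is modelled as a real unital commutative
Banach algebra (type class) together with an element j playing the role of i*1; complex
scalar multiplication is c . x = Re c x + Im c (j x).\<close>

definition cscale :: "'a::real_normed_algebra_1 \<Rightarrow> complex \<Rightarrow> 'a \<Rightarrow> 'a" where
  "cscale j c x = Re c *\<^sub>R x + Im c *\<^sub>R (j * x)"

definition complex_banach_algebra :: "'a::{real_normed_algebra_1,banach,comm_ring_1} \<Rightarrow> bool" where
  "complex_banach_algebra j \<longleftrightarrow> j * j = -1 \<and> (\<forall>c x. norm (cscale j c x) = cmod c * norm x)"

definition ring_ideal :: "'a::comm_ring_1 set \<Rightarrow> bool" where
  "ring_ideal I \<longleftrightarrow> 0 \<in> I \<and> (\<forall>x\<in>I. \<forall>y\<in>I. x + y \<in> I) \<and> (\<forall>a. \<forall>x\<in>I. a * x \<in> I)"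

definition maximal_ideal :: "'a::comm_ring_1 set \<Rightarrow> bool" where
  "maximal_ideal I \<longleftrightarrow> ring_ideal I \<and> I \<noteq> UNIV \<and>
     (\<forall>J. ring_ideal J \<and> I \<subseteq> J \<and> J \<noteq> UNIV \<longrightarrow> J = I)"

definition semisimple :: "'a::comm_ring_1 itself \<Rightarrow> bool" where
  "semisimple _ \<longleftrightarrow> \<Inter>{I :: 'a set. maximal_ideal I} = {0}"

text \<open>Maximal ideal space = nonzero complex-linear multiplicative functionals.\<close>
definition characters :: "'a::{real_normed_algebra_1,comm_ring_1} \<Rightarrow> ('a \<Rightarrow> complex) set" where
  "characters j = {h. (\<forall>x y. h (x + y) = h x + h y) \<and> (\<forall>x y. h (x * y) = h x * h y) \<and>
      (\<forall>r x. h (r *\<^sub>R x) = complex_of_real r * h x) \<and> h 1 = 1 \<and> h j = \<i>}"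

definition gelfand_top :: "'a::{real_normed_algebra_1,comm_ring_1} \<Rightarrow> ('a \<Rightarrow> complex) topology" where
  "gelfand_top j = subtopology (product_topology (\<lambda>_. euclidean) UNIV) (characters j)"

definition is_boundary :: "'a::{real_normed_algebra_1,comm_ring_1} \<Rightarrow> ('a \<Rightarrow> complex) set \<Rightarrow> bool" where
  "is_boundary j B \<longleftrightarrow> B \<subseteq> characters j \<and>
     (\<forall>f. \<exists>m\<in>B. \<forall>m'\<in>characters j. cmod (m' f) \<le> cmod (m f))"

definition shilov_boundary :: "'a::{real_normed_algebra_1,comm_ring_1} \<Rightarrow> ('a \<Rightarrow> complex) set" where
  "shilov_boundary j = \<Inter>{B. closedin (gelfand_top j) B \<and> is_boundary j B}"

text \<open>Elements of the check-algebra: functions on the Shilov boundary (zero outside), which are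
uniform limits on the Shilov boundary of restricted Gelfand transforms.\<close>
definition check_algebra :: "'a::{real_normed_algebra_1,comm_ring_1} \<Rightarrow> (('a \<Rightarrow> complex) \<Rightarrow> complex) set" where
  "check_algebra j = {g. (\<forall>t. t \<notin> shilov_boundary j \<longrightarrow> g t = 0) \<and>
      (\<forall>e>0. \<exists>f. \<forall>t\<in>shilov_boundary j. cmod (g t - t f) < e)}"

definition sup_norm :: "'b set \<Rightarrow> ('b \<Rightarrow> complex) \<Rightarrow> real" where
  "sup_norm S g = (SUP t\<in>S. cmod (g t))"

definition alg_automorphism :: "'a::{real_normed_algebra_1,comm_ring_1} \<Rightarrow> ('a \<Rightarrow> 'a) \<Rightarrow> bool" where
  "alg_automorphism j U \<longleftrightarrow> bij U \<and> bounded_linear U \<and> (\<forall>x y. U (x * y) = U x * U y) \<and>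
      U 1 = 1 \<and> U j = j"

definition check_op :: "'a::{real_normed_algebra_1,comm_ring_1} \<Rightarrow> 'a \<Rightarrow> ('a \<Rightarrow> 'a)
    \<Rightarrow> (('a \<Rightarrow> complex) \<Rightarrow> complex) \<Rightarrow> (('a \<Rightarrow> complex) \<Rightarrow> complex)" where
  "check_op j w U g = (\<lambda>t. if t \<in> shilov_boundary j then t w * g (t \<circ> U) else 0)"

text \<open>Spectrum of an operator L on a space X of complex functions (bounded operator on a Banach
space: lambda is in the spectrum iff L - lambda is not bijective).\<close>
definition fun_spectrum :: "('b \<Rightarrow> complex) set \<Rightarrow> (('b \<Rightarrow> complex) \<Rightarrow> ('b \<Rightarrow> complex)) \<Rightarrow> complex set" where
  "fun_spectrum X L = {c. \<not> bij_betw (\<lambda>g t. L g t - c * g t) X X}"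

definition fun_ap_spectrum :: "'b set \<Rightarrow> ('b \<Rightarrow> complex) set \<Rightarrow> (('b \<Rightarrow> complex) \<Rightarrow> ('b \<Rightarrow> complex)) \<Rightarrow> complex set" where
  "fun_ap_spectrum S X L = {c. \<forall>e>0. \<exists>g\<in>X. sup_norm S g = 1 \<and> sup_norm S (\<lambda>t. L g t - c * g t) < e}"

definition alg_spectrum :: "'a::real_normed_algebra_1 \<Rightarrow> ('a \<Rightarrow> 'a) \<Rightarrow> complex set" where
  "alg_spectrum j T = {c. \<not> bij (\<lambda>f. T f - cscale j c f)}"

end

theory Submission
  imports Defs
begin

lemma char_basic:
  assumes "h \<in> characters j"
  shows "h 0 = 0" "h (- x) = - h x" "h (x - y) = h x - h y"
    "h (cscale j c x) = c * h x" "h (x + y) = h x + h y" "h (x * y) = h x * h y" "h 1 = 1"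
proof -
  have add: "\<And>x y. h (x + y) = h x + h y" and mul: "\<And>x y. h (x * y) = h x * h y"
    and sc: "\<And>r x. h (r *\<^sub>R x) = complex_of_real r * h x" and one: "h 1 = 1" and hj: "h j = \<i>"
    using assms unfolding characters_def by auto
  have "h (0 + 0) = h 0 + h 0" by (rule add)
  then show h0: "h 0 = 0" by simp
  have hm: "h (- z) = - h z" for z
  proof -
    have "h (z + - z) = h z + h (- z)" by (rule add)
    with h0 show ?thesis by (metis add.right_inverse minus_unique)
  qed
  then show "h (- x) = - h x" .
  show "h (x - y) = h x - h y" using add hm by (metis diff_conv_add_uminus)
  show "h (cscale j c x) = c * h x"
    unfolding cscale_def add sc mul hj
    by (simp add: complex_eq_iff algebra_simps)
  show "h (x + y) = h x + h y" "h (x * y) = h x * h y" "h 1 = 1" by (fact add mul one)+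
qed

lemma neumann:
  fixes y :: "'a::{real_normed_algebra_1,banach}"
  assumes "norm y < 1"
  shows "\<exists>z. (1 - y) * z = 1"
proof -
  have "summable (\<lambda>n. norm y ^ n)" using assms by simp
  then have sm: "summable (\<lambda>n. y ^ n)"
    by (rule summable_comparison_test[rotated]) (auto intro: norm_power_ineq)
  then have "(\<lambda>n. (1 - y) * y ^ n) sums ((1 - y) * suminf (\<lambda>n. y ^ n))"
    by (intro sums_mult summable_sums)
  moreover have "(\<lambda>n. (- (y ^ Suc n)) - (- (y ^ n))) sums (0 - (- (y ^ 0)))"
    by (rule telescope_sums) (use assms in \<open>auto intro!: tendsto_eq_intros LIMSEQ_power_zero\<close>)
  moreover have "(\<lambda>n. (1 - y) * y ^ n) = (\<lambda>n. (- (y ^ Suc n)) - (- (y ^ n)))"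
    by (auto simp: algebra_simps)
  ultimately show ?thesis by (metis sums_unique2 power_0 diff_0 minus_minus)
qed

lemma char_bound:
  assumes cb: "complex_banach_algebra j" and h: "h \<in> characters j"
  shows "cmod (h x) \<le> norm x"
proof (rule ccontr)
  assume "\<not> ?thesis"
  then have lt: "norm x < cmod (h x)" by simp
  then have nz: "h x \<noteq> 0" by (metis norm_ge_zero norm_zero not_less)
  define y where "y = cscale j (1 / h x) x"
  have "norm y = cmod (1 / h x) * norm x" using cb unfolding complex_banach_algebra_def y_def by blast
  also have "\<dots> < 1" using lt nz by (simp add: norm_divide field_simps)
  finally obtain z where z: "(1 - y) * z = 1" using neumann by blast
  have "h y = 1" unfolding y_def using char_basic(4)[OF h] nz by simp
  then have "h ((1 - y) * z) = 0" using char_basic[OF h] by simp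
  with z char_basic(7)[OF h] show False by simp
qed


lemma char_comp:
  assumes h: "h \<in> characters j"
    and add: "\<And>x y. F (x + y) = F x + F y" and mul: "\<And>x y. F (x * y) = F x * F y"
    and sc: "\<And>r x. F (r *\<^sub>R x) = r *\<^sub>R F x" and "F 1 = 1" and "F j = j"
  shows "h \<circ> F \<in> characters j"
  using h assms unfolding characters_def by auto

lemma aut_props:
  assumes "alg_automorphism j U"
  shows "\<And>x y. U (x + y) = U x + U y" "\<And>x y. U (x * y) = U x * U y"
    "\<And>r x. U (r *\<^sub>R x) = r *\<^sub>R U x" "U 1 = 1" "U j = j"
    "\<And>x. U (inv U x) = x" "\<And>x. inv U (U x) = x"
    "\<And>x y. inv U (x + y) = inv U x + inv U y" "\<And>x y. inv U (x * y) = inv U x * inv U y"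
    "\<And>r x. inv U (r *\<^sub>R x) = r *\<^sub>R inv U x" "inv U 1 = 1" "inv U j = j"
proof -
  have b: "bij U" and bl: "bounded_linear U" and m: "\<And>x y. U (x * y) = U x * U y"
    and o: "U 1 = 1" and jj: "U j = j"
    using assms unfolding alg_automorphism_def by auto
  have l: "linear U" using bl bounded_linear.linear by blast
  show a: "\<And>x y. U (x + y) = U x + U y" using l by (simp add: linear_add)
  show s: "\<And>r x. U (r *\<^sub>R x) = r *\<^sub>R U x" using l by (simp add: linear_scale)
  show "\<And>x y. U (x * y) = U x * U y" "U 1 = 1" "U j = j" by (fact m o jj)+
  show ui: "\<And>x. U (inv U x) = x" using b by (simp add: bij_is_surj surj_f_inv_f)
  show iu: "\<And>x. inv U (U x) = x" using b by (simp add: bij_is_inj)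
  have inj: "\<And>x y. U x = U y \<Longrightarrow> x = y" using b by (metis iu)
  show "\<And>x y. inv U (x + y) = inv U x + inv U y" by (rule inj) (simp add: a ui)
  show "\<And>x y. inv U (x * y) = inv U x * inv U y" by (rule inj) (simp add: m ui)
  show "\<And>r x. inv U (r *\<^sub>R x) = r *\<^sub>R inv U x" by (rule inj) (simp add: s ui)
  show "inv U 1 = 1" by (rule inj) (simp add: o ui)
  show "inv U j = j" by (rule inj) (simp add: jj ui)
qed

lemma shilov_phi:
  assumes aut: "alg_automorphism j U" and t: "t \<in> shilov_boundary j"
  shows "t \<circ> U \<in> shilov_boundary j"
  unfolding shilov_boundary_def
proof (rule InterI)
  fix B assume "B \<in> {B. closedin (gelfand_top j) B \<and> is_boundary j B}"
  then have cl: "closedin (gelfand_top j) B" and bd: "is_boundary j B" by auto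
  note ap = aut_props[OF aut]
  have cU: "\<And>h. h \<in> characters j \<Longrightarrow> h \<circ> U \<in> characters j"
    by (rule char_comp) (use ap in auto)
  have cV: "\<And>h. h \<in> characters j \<Longrightarrow> h \<circ> inv U \<in> characters j"
    by (rule char_comp) (use ap in auto)
  define B' where "B' = {h \<in> characters j. h \<circ> U \<in> B}"
  have tsp: "topspace (gelfand_top j) = characters j"
    unfolding gelfand_top_def by (simp add: topspace_product_topology)
  have "continuous_map (gelfand_top j) (gelfand_top j) (\<lambda>h. h \<circ> U)"
    unfolding gelfand_top_def continuous_map_in_subtopology
  proof
    show "continuous_map (subtopology (product_topology (\<lambda>_. euclidean) UNIV) (characters j))
        (product_topology (\<lambda>_. euclidean) UNIV) (\<lambda>h. h \<circ> U)"
      by (rule continuous_map_from_subtopology)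
        (auto simp: continuous_map_componentwise_UNIV o_def intro: continuous_map_product_projection)
    show "(\<lambda>h. h \<circ> U) \<in> topspace (subtopology (product_topology (\<lambda>_. euclidean) UNIV) (characters j))
        \<rightarrow> characters j"
      using cU by (auto simp: topspace_product_topology)
  qed
  from closedin_continuous_map_preimage[OF this cl]
  have clB': "closedin (gelfand_top j) B'" unfolding tsp B'_def .
  have bdB': "is_boundary j B'"
    unfolding is_boundary_def
  proof (intro conjI allI)
    show "B' \<subseteq> characters j" unfolding B'_def by auto
    fix f
    obtain m where m: "m \<in> B" and mx: "\<forall>m'\<in>characters j. cmod (m' (inv U f)) \<le> cmod (m (inv U f))"
      using bd unfolding is_boundary_def by blast
    have mc: "m \<in> characters j" using m bd unfolding is_boundary_def by auto
    have "m \<circ> inv U \<in> B'"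
      unfolding B'_def using cV[OF mc] m by (simp add: o_def ap(7) o_assoc[symmetric])
    moreover have "\<forall>m'\<in>characters j. cmod (m' f) \<le> cmod ((m \<circ> inv U) f)"
    proof
      fix m' assume "m' \<in> characters j"
      from mx[rule_format, OF cU[OF this]] show "cmod (m' f) \<le> cmod ((m \<circ> inv U) f)"
        by (simp add: ap(6))
    qed
    ultimately show "\<exists>m\<in>B'. \<forall>m'\<in>characters j. cmod (m' f) \<le> cmod (m f)" by blast
  qed
  have "t \<in> B'" using t clB' bdB' unfolding shilov_boundary_def by blast
  then show "t \<circ> U \<in> B" unfolding B'_def by simp
qed

definition emb :: "'a::real_normed_algebra_1 \<Rightarrow> complex \<Rightarrow> 'a" where
  "emb j c = Re c *\<^sub>R 1 + Im c *\<^sub>R j"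

lemma cscale_emb: "cscale j c x = emb j c * x"
  unfolding cscale_def emb_def by (simp add: algebra_simps)

lemma emb_add: "emb j (c + d) = emb j c + emb j d"
  unfolding emb_def by (simp add: algebra_simps)
lemma emb_zero[simp]: "emb j 0 = 0" unfolding emb_def by simp
lemma emb_one[simp]: "emb j 1 = 1" unfolding emb_def by simp
lemma emb_ii[simp]: "emb j \<i> = j" unfolding emb_def by simp
lemma emb_minus: "emb j (- c) = - emb j c"
  unfolding emb_def by (simp add: algebra_simps)
lemma emb_diff: "emb j (c - d) = emb j c - emb j d"
  unfolding emb_def by (simp add: algebra_simps)
lemma emb_of_real: "emb j (complex_of_real r) = r *\<^sub>R 1" unfolding emb_def by simp
lemma emb_of_nat: "emb j (of_nat n) = of_nat n"
  using emb_of_real[of j "real n"] by (simp add: scaleR_conv_of_real)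

lemma emb_mult:
  fixes j :: "'a::{real_normed_algebra_1,comm_ring_1}"
  assumes "j * j = -1"
  shows "emb j (c * d) = emb j c * emb j d"
proof -
  have "emb j c * emb j d = (Re c * Re d) *\<^sub>R 1 + (Re c * Im d) *\<^sub>R j + (Im c * Re d) *\<^sub>R j
      + (Im c * Im d) *\<^sub>R (j * j)"
    unfolding emb_def by (simp add: algebra_simps)
  also have "\<dots> = emb j (c * d)"
    unfolding emb_def using assms by (simp add: algebra_simps)
  finally show ?thesis by simp
qed

locale cba =
  fixes j :: "'a::{real_normed_algebra_1,banach,comm_ring_1}"
  assumes cba: "complex_banach_algebra j"
begin

lemma jj: "j * j = -1" using cba unfolding complex_banach_algebra_def by simp

lemma e_mult: "emb j (c * d) = emb j c * emb j d" using emb_mult[OF jj] .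

lemma norm_emb_mult: "norm (emb j c * x) = cmod c * norm x"
  using cba unfolding complex_banach_algebra_def cscale_emb by simp

lemma norm_emb: "norm (emb j c) = cmod c"
  using norm_emb_mult[of c 1] by simp

lemma e_inv: "c \<noteq> 0 \<Longrightarrow> emb j c * emb j (1 / c) = 1"
  by (simp flip: e_mult)

lemma e_power: "emb j (c ^ n) = emb j c ^ n"
  by (induction n) (simp_all add: e_mult)

lemma e_sum: "emb j c * sum f S = (\<Sum>k\<in>S. emb j c * f k)"
  by (simp add: sum_distrib_left)

end

lemma neumann_bound:
  fixes y :: "'a::{real_normed_algebra_1,banach}"
  assumes "norm y < 1"
  shows "\<exists>z. (1 - y) * z = 1 \<and> norm z \<le> 1 / (1 - norm y)"
proof -
  obtain z where z: "(1 - y) * z = 1" using neumann[OF assms] by blast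
  have "z = 1 + y * z" using z by (simp add: algebra_simps)
  then have "norm z \<le> norm (1::'a) + norm (y * z)" by (metis norm_triangle_ineq)
  also have "\<dots> \<le> 1 + norm y * norm z" by (simp add: norm_mult_ineq)
  finally have "norm z * (1 - norm y) \<le> 1" by (simp add: algebra_simps)
  then have "norm z \<le> 1 / (1 - norm y)" using assms by (simp add: field_simps)
  with z show ?thesis by blast
qed

locale maxid = cba j for j :: "'a::{real_normed_algebra_1,banach,comm_ring_1}" +
  fixes M :: "'a set"
  assumes mx: "maximal_ideal M"
begin

lemma M0: "0 \<in> M" and Madd: "a \<in> M \<Longrightarrow> b \<in> M \<Longrightarrow> a + b \<in> M"
  and Mmult: "b \<in> M \<Longrightarrow> a * b \<in> M" and Mne: "M \<noteq> UNIV"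
  using mx unfolding maximal_ideal_def ring_ideal_def by auto

lemma Mmult2: "a \<in> M \<Longrightarrow> a * b \<in> M" using Mmult[of a b] by (simp add: mult.commute)

lemma Mneg: "a \<in> M \<Longrightarrow> - a \<in> M" using Mmult[of a "-1"] by simp

lemma Mdiff: "a \<in> M \<Longrightarrow> b \<in> M \<Longrightarrow> a - b \<in> M"
  using Madd[of a "- b"] Mneg[of b] by (simp only: diff_conv_add_uminus)

lemma Msum: "(\<And>k. k \<in> S \<Longrightarrow> f k \<in> M) \<Longrightarrow> sum f S \<in> M"
  by (induction S rule: infinite_finite_induct) (auto intro: M0 Madd)

lemma one_notin: "1 \<notin> M"
  using Mne Mmult[of 1] by (metis UNIV_eq_I mult.right_neutral)

lemma inv_mod: assumes "a \<notin> M" shows "\<exists>y. a * y - 1 \<in> M"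
proof -
  define J where "J = {m + a * y | m y. m \<in> M}"
  have "ring_ideal J" unfolding ring_ideal_def J_def
  proof (intro conjI ballI allI)
    show "0 \<in> {m + a * y |m y. m \<in> M}" using M0 by (metis (mono_tags, lifting) add_0 mem_Collect_eq mult_zero_right)
  next
    fix u v assume "u \<in> {m + a * y |m y. m \<in> M}" "v \<in> {m + a * y |m y. m \<in> M}"
    then obtain m1 y1 m2 y2 where "u = m1 + a * y1" "v = m2 + a * y2" "m1 \<in> M" "m2 \<in> M" by blast
    then show "u + v \<in> {m + a * y |m y. m \<in> M}"
      by (intro CollectI exI[of _ "m1 + m2"] exI[of _ "y1 + y2"]) (auto simp: algebra_simps Madd)
  next
    fix b u assume "u \<in> {m + a * y |m y. m \<in> M}"
    then obtain m1 y1 where "u = m1 + a * y1" "m1 \<in> M" by blast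
    then show "b * u \<in> {m + a * y |m y. m \<in> M}"
      by (intro CollectI exI[of _ "b * m1"] exI[of _ "b * y1"]) (auto simp: algebra_simps Mmult)
  qed
  moreover have "M \<subseteq> J" unfolding J_def by (force intro: exI[of _ 0])
  moreover have "a \<in> J" unfolding J_def using M0 by (force intro: exI[of _ 1])
  ultimately have "J = UNIV" using mx assms unfolding maximal_ideal_def by blast
  then obtain m y where "1 = m + a * y" "m \<in> M" unfolding J_def by blast
  then have "a * y - 1 = - m" by (simp add: algebra_simps)
  with \<open>m \<in> M\<close> Mneg show ?thesis by metis
qed

lemma prime: assumes "a * b \<in> M" "a \<notin> M" shows "b \<in> M"
proof -
  obtain y where y: "a * y - 1 \<in> M" using inv_mod[OF assms(2)] by blast
  have "b = y * (a * b) - b * (a * y - 1)" by (simp add: algebra_simps)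
  also have "\<dots> \<in> M" using Mdiff[OF Mmult[OF assms(1)] Mmult[OF y]] .
  finally show ?thesis .
qed

lemma power_notin: "a \<notin> M \<Longrightarrow> a ^ n \<notin> M"
  by (induction n) (use one_notin prime in auto)

lemma norm_one_minus: assumes "m \<in> M" shows "1 \<le> norm (1 - m)"
proof (rule ccontr)
  assume "\<not> ?thesis"
  then obtain z where "(1 - (1 - m)) * z = 1" using neumann[of "1 - m"] by auto
  then have "1 \<in> M" using Mmult2[OF assms, of z] by simp
  with one_notin show False by simp
qed

lemma closedM: "closed M"
proof -
  define C where "C = closure M"
  have "ring_ideal C" unfolding ring_ideal_def
  proof (intro conjI ballI allI)
    show "0 \<in> C" using M0 C_def closure_subset by blast
  next
    fix u v assume "u \<in> C" "v \<in> C"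
    then obtain f g where f: "\<forall>n. f n \<in> M" "f \<longlonglongrightarrow> u" and g: "\<forall>n. g n \<in> M" "g \<longlonglongrightarrow> v"
      unfolding C_def closure_sequential by blast
    have "(\<lambda>n. f n + g n) \<longlonglongrightarrow> u + v" using f g by (intro tendsto_add) auto
    moreover have "\<forall>n. f n + g n \<in> M" using f g Madd by blast
    ultimately show "u + v \<in> C" unfolding C_def closure_sequential by (intro exI conjI) assumption+
  next
    fix b u assume "u \<in> C"
    then obtain f where f: "\<forall>n. f n \<in> M" "f \<longlonglongrightarrow> u"
      unfolding C_def closure_sequential by blast
    have "(\<lambda>n. b * f n) \<longlonglongrightarrow> b * u" using f by (intro tendsto_mult tendsto_const) auto
    moreover have "\<forall>n. b * f n \<in> M" using f Mmult by blast
    ultimately show "b * u \<in> C" unfolding C_def closure_sequential by (intro exI conjI) assumption+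
  qed
  moreover have "M \<subseteq> C" unfolding C_def by (rule closure_subset)
  moreover have "1 \<notin> C"
  proof
    assume "1 \<in> C"
    then obtain m where "m \<in> M" "dist m 1 < 1" unfolding C_def closure_approachable
      using zero_less_one by blast
    then have "norm (1 - m) < 1" by (simp add: dist_norm norm_minus_commute)
    with norm_one_minus[OF \<open>m \<in> M\<close>] show False by simp
  qed
  ultimately have "C = M" using mx unfolding maximal_ideal_def by blast
  then show ?thesis unfolding C_def by (metis closure_closed closed_closure)
qed

definition q :: "'a \<Rightarrow> real" where "q a = infdist a M"

lemma q_nonneg: "0 \<le> q a" unfolding q_def by (rule infdist_nonneg)

lemma q_le: "m \<in> M \<Longrightarrow> q a \<le> norm (a - m)"
  unfolding q_def using infdist_le[of m M a] by (simp add: dist_norm)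

lemma q_le_norm: "q a \<le> norm a" using q_le[OF M0] by simp

lemma q_zero_iff: "q a = 0 \<longleftrightarrow> a \<in> M"
  unfolding q_def using in_closed_iff_infdist_zero[OF closedM] M0 by blast

lemma q_approx: assumes "e > 0" shows "\<exists>m\<in>M. norm (a - m) < q a + e"
proof (rule ccontr)
  assume "\<not> ?thesis"
  then have "\<forall>m\<in>M. q a + e \<le> dist a m" by (auto simp: dist_norm not_less)
  then have "q a + e \<le> infdist a M" unfolding infdist_notempty[OF ex_in_conv[THEN iffD1, OF exI[of _ 0], OF M0]]
    using M0 by (intro cINF_greatest) auto
  with assms show False unfolding q_def by simp
qed

lemma q_le_by_eps: assumes "\<And>e. e > 0 \<Longrightarrow> q a \<le> B + e" shows "q a \<le> B"
  using assms by (metis field_le_epsilon)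

lemma q_cong: assumes "a - b \<in> M" shows "q a \<le> q b"
proof (rule q_le_by_eps)
  fix e :: real assume "e > 0"
  then obtain m where "m \<in> M" "norm (b - m) < q b + e" using q_approx by blast
  moreover have "a - (m + (a - b)) = b - m" by simp
  moreover have "m + (a - b) \<in> M" using Madd assms \<open>m \<in> M\<close> by blast
  ultimately show "q a \<le> q b + e" using q_le[of "m + (a - b)" a] by simp
qed

lemma q_cong_eq: "a - b \<in> M \<Longrightarrow> q a = q b"
  using q_cong[of a b] q_cong[of b a] Mneg[of "a - b"] by (simp add: antisym)

lemma q_add: "q (a + b) \<le> q a + q b"
proof (rule q_le_by_eps)
  fix e :: real assume "e > 0"
  then have e2: "e/2 > 0" by simp
  obtain m1 where "m1 \<in> M" "norm (a - m1) < q a + e/2" using q_approx[OF e2, of a] by blast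
  obtain m2 where "m2 \<in> M" "norm (b - m2) < q b + e/2" using q_approx[OF e2, of b] by blast
  have "m1 + m2 \<in> M" using Madd \<open>m1 \<in> M\<close> \<open>m2 \<in> M\<close> by blast
  then have "q (a + b) \<le> norm (a + b - (m1 + m2))" by (rule q_le)
  then have "q (a + b) \<le> norm ((a - m1) + (b - m2))" by (simp add: algebra_simps)
  also have "\<dots> \<le> norm (a - m1) + norm (b - m2)" by (rule norm_triangle_ineq)
  finally show "q (a + b) \<le> q a + q b + e" using \<open>norm (a - m1) < _\<close> \<open>norm (b - m2) < _\<close> by simp
qed

lemma q_minus: "q (- a) = q a"
proof -
  have "\<And>b. q (- b) \<le> q b"
  proof -
    fix b
    show "q (- b) \<le> q b"
    proof (rule q_le_by_eps)
      fix e :: real assume "e > 0"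
      then obtain m where "m \<in> M" "norm (b - m) < q b + e" using q_approx by blast
      have "q (- b) \<le> norm (- b - (- m))" by (rule q_le) (use Mneg \<open>m \<in> M\<close> in auto)
      also have "\<dots> = norm (b - m)" by (simp add: norm_minus_commute)
      finally show "q (- b) \<le> q b + e" using \<open>norm (b - m) < q b + e\<close> by simp
    qed
  qed
  from this[of a] this[of "- a"] show ?thesis by simp
qed

lemma q_diff: "q (a - b) \<le> q a + q b"
  using q_add[of a "- b"] q_minus[of b] by simp

lemma q_diff_tri: "q (a - c) \<le> q (a - b) + q (b - c)"
  using q_add[of "a - b" "b - c"] by simp

lemma q_mult: "q (a * b) \<le> q a * q b"
proof (rule q_le_by_eps)
  fix e :: real assume e: "e > 0"
  define d where "d = min 1 (e / (q a + q b + 1))"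
  have d: "d > 0" "d \<le> 1" using e q_nonneg[of a] q_nonneg[of b] by (auto simp: d_def)
  have dd: "d * (q a + q b + 1) \<le> e"
  proof -
    have pos: "0 < q a + q b + 1" using q_nonneg[of a] q_nonneg[of b] by simp
    have "d \<le> e / (q a + q b + 1)" unfolding d_def by simp
    then show ?thesis using pos by (simp add: le_divide_eq)
  qed
  obtain m1 m2 where m: "m1 \<in> M" "norm (a - m1) < q a + d" "m2 \<in> M" "norm (b - m2) < q b + d"
    using q_approx[OF d(1)] by blast
  have "a * b - ((a - m1) * (b - m2)) = m1 * b + a * m2 - m1 * m2" by (simp add: algebra_simps)
  also have "\<dots> \<in> M" using m by (intro Mdiff Madd Mmult Mmult2) auto
  finally have mm: "a * b - ((a - m1) * (b - m2)) \<in> M" .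
  have "q (a * b) \<le> norm (a * b - (a * b - ((a - m1) * (b - m2))))" by (rule q_le[OF mm])
  then have "q (a * b) \<le> norm ((a - m1) * (b - m2))" by simp
  also have "\<dots> \<le> norm (a - m1) * norm (b - m2)" by (rule norm_mult_ineq)
  also have "\<dots> \<le> (q a + d) * (q b + d)"
    using m by (intro mult_mono) (auto intro: less_imp_le order_trans[OF norm_ge_zero])
  also have "\<dots> = q a * q b + d * (q a + q b + d)" by (simp add: algebra_simps)
  also have "\<dots> \<le> q a * q b + e"
  proof -
    have "d * (q a + q b + d) \<le> d * (q a + q b + 1)" using d by (intro mult_left_mono) auto
    then show ?thesis using dd by simp
  qed
  finally show "q (a * b) \<le> q a * q b + e" .
qed

lemma q_emb: "q (emb j c * a) \<le> cmod c * q a"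
  using q_mult[of "emb j c" a] q_le_norm[of "emb j c"] norm_emb[of c] q_nonneg[of a]
  by (metis mult_right_mono order_trans)

lemma q_one: "1 \<le> q 1"
proof (rule ccontr)
  assume "\<not> ?thesis"
  then have "1 - q 1 > 0" by simp
  then obtain m where "m \<in> M" "norm (1 - m) < q 1 + (1 - q 1)" using q_approx[of "1 - q 1" 1] by blast
  with norm_one_minus show False by fastforce
qed

lemma q_sum: "q (sum f S) \<le> (\<Sum>k\<in>S. q (f k))"
proof (induction S rule: infinite_finite_induct)
  case (infinite A) then show ?case using q_zero_iff[of 0] M0 by simp
next
  case empty then show ?case using q_zero_iff[of 0] M0 by simp
next
  case (insert x F) then show ?case using q_add[of "f x" "sum f F"] by simp
qed

end

locale gm = maxid j M for j :: "'a::{real_normed_algebra_1,banach,comm_ring_1}" and M +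
  fixes x :: 'a
  assumes hyp: "\<And>c. x - emb j c \<notin> M"
begin

definition R :: "complex \<Rightarrow> 'a" where "R c = (SOME y. (x - emb j c) * y - 1 \<in> M)"

lemma R_inv: "(x - emb j c) * R c - 1 \<in> M"
  unfolding R_def using inv_mod[OF hyp] by (rule someI_ex)

lemma x_notin: "x \<notin> M" using hyp[of 0] by simp

lemma R_unique: assumes "(x - emb j c) * w = 1" shows "R c - w \<in> M"
proof -
  have "w * ((x - emb j c) * R c - 1) = R c * ((x - emb j c) * w) - w" by (simp add: algebra_simps)
  also have "\<dots> = R c - w" using assms by simp
  finally show ?thesis using Mmult[OF R_inv, of w c] by simp
qed

lemma resolvent: "R c - R d - emb j (c - d) * R c * R d \<in> M"
proof -
  have "R c - R d - emb j (c - d) * R c * R d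
      = R d * ((x - emb j c) * R c - 1) - R c * ((x - emb j d) * R d - 1)"
    by (simp add: emb_diff algebra_simps)
  also have "\<dots> \<in> M" using Mmult[OF R_inv] by (intro Mdiff) auto
  finally show ?thesis .
qed

lemma qR_diff: "q (R c - R d) \<le> cmod (c - d) * q (R c) * q (R d)"
proof -
  have "q (R c - R d) = q (emb j (c - d) * R c * R d)"
    by (rule q_cong_eq) (use resolvent in simp)
  also have "\<dots> \<le> q (emb j (c - d) * R c) * q (R d)" by (rule q_mult)
  also have "\<dots> \<le> cmod (c - d) * q (R c) * q (R d)"
    using q_emb q_nonneg by (intro mult_right_mono) auto
  finally show ?thesis .
qed

lemma qR_large: assumes "2 * norm x \<le> cmod c" "c \<noteq> 0" shows "q (R c) \<le> 2 / cmod c"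
proof -
  define y where "y = emb j (1 / c) * x"
  have ny: "norm y = norm x / cmod c" unfolding y_def norm_emb_mult by (simp add: norm_divide)
  have ny2: "norm y \<le> 1/2" using assms unfolding ny by (simp add: field_simps)
  then obtain z where z: "(1 - y) * z = 1" "norm z \<le> 1 / (1 - norm y)"
    using neumann_bound[of y] by auto
  have p: "1 - norm y > 0" using ny2 by simp
  have "1 / (1 - norm y) \<le> 2" using ny2 p by (simp add: divide_le_eq)
  then have nz: "norm z \<le> 2" using z(2) by linarith
  have xeq: "x = emb j c * y" unfolding y_def using e_inv[OF assms(2)] by (simp flip: mult.assoc)
  have e1: "emb j c * emb j (- 1 / c) = - 1"
    using assms(2) by (simp flip: e_mult add: emb_minus)
  have "(x - emb j c) * (emb j (- 1 / c) * z) = (emb j c * emb j (- 1 / c)) * ((y - 1) * z)"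
    unfolding xeq by (simp add: algebra_simps)
  also have "\<dots> = (1 - y) * z" unfolding e1 by (simp add: algebra_simps)
  finally have "(x - emb j c) * (emb j (- 1 / c) * z) = 1" using z(1) by simp
  from R_unique[OF this] have "q (R c) = q (emb j (- 1 / c) * z)" by (rule q_cong_eq)
  also have "\<dots> \<le> norm (emb j (- 1 / c) * z)" by (rule q_le_norm)
  also have "\<dots> = norm z / cmod c" unfolding norm_emb_mult by (simp add: norm_divide)
  also have "\<dots> \<le> 2 / cmod c" using nz by (simp add: divide_right_mono)
  finally show ?thesis .
qed

lemma q_lip: "\<bar>q a - q b\<bar> \<le> q (a - b)"
proof -
  have "q a \<le> q (a - b) + q b" using q_add[of "a - b" b] by simp
  moreover have "q b \<le> q (b - a) + q a" using q_add[of "b - a" a] by simp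
  moreover have "q (b - a) = q (a - b)" using q_minus[of "a - b"] by simp
  ultimately show ?thesis by linarith
qed

lemma qR_local: assumes "cmod (c - d) * q (R d) \<le> 1/2" shows "q (R c) \<le> 2 * q (R d)"
proof -
  have "q (R c) \<le> q (R c - R d) + q (R d)" using q_add[of "R c - R d" "R d"] by simp
  also have "\<dots> \<le> cmod (c - d) * q (R c) * q (R d) + q (R d)" using qR_diff by simp
  also have "cmod (c - d) * q (R c) * q (R d) = (cmod (c - d) * q (R d)) * q (R c)" by simp
  also have "\<dots> \<le> 1/2 * q (R c)" using assms q_nonneg by (intro mult_right_mono) auto
  finally show ?thesis by simp
qed

lemma qR_cont: "continuous_on UNIV (\<lambda>c. q (R c))"
  unfolding continuous_on_iff
proof (intro ballI allI impI)
  fix d :: complex and e :: real assume e: "e > 0"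
  define K where "K = q (R d) + 1"
  have K: "K > 0" "q (R d) \<le> K" using q_nonneg[of "R d"] by (auto simp: K_def)
  define dl where "dl = min (1 / (2 * K)) (e / (4 * K * K))"
  have dl: "dl > 0" using K e by (simp add: dl_def)
  show "\<exists>dl>0. \<forall>c\<in>UNIV. dist c d < dl \<longrightarrow> dist (q (R c)) (q (R d)) < e"
  proof (intro exI[of _ dl] conjI ballI impI dl)
    fix c :: complex assume "dist c d < dl"
    then have cd: "cmod (c - d) < dl" by (simp add: dist_norm)
    have "cmod (c - d) * q (R d) \<le> dl * K" using cd K q_nonneg dl by (intro mult_mono) auto
    also have "\<dots> \<le> 1 / (2 * K) * K" using K by (intro mult_right_mono) (auto simp: dl_def)
    finally have "cmod (c - d) * q (R d) \<le> 1/2" using K by simp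
    from qR_local[OF this] have Rc: "q (R c) \<le> 2 * K" using K by simp
    have "dist (q (R c)) (q (R d)) \<le> q (R c - R d)" using q_lip by (simp add: dist_real_def)
    also have "\<dots> \<le> cmod (c - d) * q (R c) * q (R d)" by (rule qR_diff)
    also have "\<dots> \<le> dl * (2 * K) * K" using cd Rc K q_nonneg dl
      by (intro mult_mono) (auto intro: mult_nonneg_nonneg)
    also have "\<dots> \<le> e / (4 * K * K) * (2 * K) * K" using K by (intro mult_right_mono) (auto simp: dl_def)
    also have "\<dots> = e / 2" using K by (simp add: field_simps)
    finally show "dist (q (R c)) (q (R d)) < e" using e by simp
  qed
qed

lemma qR_bound: "\<exists>C>0. \<forall>c. cmod c \<le> r \<longrightarrow> q (R c) \<le> C"
proof -
  have "compact ((\<lambda>c. q (R c)) ` cball 0 r)"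
    by (rule compact_continuous_image) (use qR_cont continuous_on_subset in auto)
  then obtain B where B: "\<forall>y\<in>(\<lambda>c. q (R c)) ` cball 0 r. norm y \<le> B"
    using compact_imp_bounded bounded_iff by metis
  show ?thesis
  proof (intro exI[of _ "max B 1"] conjI allI impI)
    fix c :: complex assume "cmod c \<le> r"
    then have "norm (q (R c)) \<le> B" using B by auto
    then show "q (R c) \<le> max B 1" by simp
  qed simp
qed

end

definition om :: "nat \<Rightarrow> complex" where "om m = cis (2 * pi / 2 ^ m)"

lemma om_sq: "om (Suc m) ^ 2 = om m"
proof -
  have "om (Suc m) ^ 2 = cis (real 2 * (2 * pi / 2 ^ Suc m))" unfolding om_def by (rule Complex.DeMoivre)
  also have "real 2 * (2 * pi / 2 ^ Suc m) = 2 * pi / 2 ^ m" by (simp add: field_simps)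
  finally show ?thesis unfolding om_def .
qed

lemma om_pow2: "om (Suc m) ^ (2 * k) = om m ^ k"
  by (simp add: power_mult om_sq)

lemma om_half: "om (Suc m) ^ (2 ^ m) = -1"
proof -
  have "om (Suc m) ^ (2 ^ m) = cis (real (2 ^ m) * (2 * pi / 2 ^ Suc m))"
    unfolding om_def by (rule Complex.DeMoivre)
  also have "real (2 ^ m) * (2 * pi / 2 ^ Suc m) = pi" by (simp add: field_simps)
  finally show ?thesis by simp
qed

lemma norm_om: "cmod (om m) = 1" unfolding om_def by simp

lemma om_close: "cmod (om m - 1) \<le> 2 * pi / 2 ^ m"
proof -
  have "cmod (om m - 1) = 2 * \<bar>sin (2 * pi / 2 ^ m / 2)\<bar>"
    unfolding om_def cis_conv_exp using dist_exp_i_1[of "2 * pi / 2 ^ m"] by simp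
  also have "\<bar>sin (2 * pi / 2 ^ m / 2)\<bar> \<le> \<bar>2 * pi / 2 ^ m / 2\<bar>" by (rule abs_sin_x_le_abs_x)
  also have "\<bar>2 * pi / 2 ^ m / 2\<bar> = pi / 2 ^ m" by simp
  finally show ?thesis by simp
qed

lemma sum_pairs: "(\<Sum>k<2 * n. f k) = (\<Sum>k<n. f (2 * k) + f (Suc (2 * k)))"
proof (induction n)
  case (Suc n)
  have e: "{..<2 * Suc n} = insert (Suc (2 * n)) (insert (2 * n) {..<2 * n})" by auto
  have "(\<Sum>k<2 * Suc n. f k) = f (Suc (2 * n)) + (\<Sum>k\<in>insert (2 * n) {..<2 * n}. f k)"
    unfolding e by (rule sum.insert) auto
  also have "(\<Sum>k\<in>insert (2 * n) {..<2 * n}. f k) = f (2 * n) + (\<Sum>k<2 * n. f k)"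
    by (rule sum.insert) auto
  finally have "(\<Sum>k<2 * Suc n. f k) = f (Suc (2 * n)) + (f (2 * n) + (\<Sum>k<2 * n. f k))" .
  then show ?case using Suc.IH by (simp add: algebra_simps)
qed simp

context gm
begin

definition Q :: "nat \<Rightarrow> complex \<Rightarrow> 'a" where
  "Q m c = emb j (1 / 2 ^ m) * (\<Sum>k<2 ^ m. x * R (c * om m ^ k))"

lemma half: "emb j (1 / 2) * (y + y) = y"
proof -
  have e2: "emb j 2 = 2" using emb_of_nat[of j 2] by simp
  have "y + y = emb j 2 * y" unfolding e2 by (rule mult_2[symmetric])
  then have "emb j (1 / 2) * (y + y) = (emb j (1 / 2) * emb j 2) * y" by (simp only: mult.assoc)
  also have "emb j (1 / 2) * emb j 2 = 1" by (simp flip: e_mult)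
  finally show ?thesis by simp
qed

lemma J2: "Q (Suc m) c = emb j (1 / 2) * (Q m c + Q m (c * om (Suc m)))"
proof -
  have "(\<Sum>k<2 ^ Suc m. x * R (c * om (Suc m) ^ k))
      = (\<Sum>k<2 ^ m. x * R (c * om m ^ k)) + (\<Sum>k<2 ^ m. x * R (c * om (Suc m) * om m ^ k))"
    by (simp add: sum_pairs sum.distrib om_pow2 mult.assoc)
  moreover have "emb j (1 / 2 ^ Suc m) = emb j (1 / 2) * emb j (1 / 2 ^ m)"
    by (simp flip: e_mult)
  ultimately show ?thesis unfolding Q_def by (simp add: algebra_simps)
qed

lemma J1: "(x ^ (2 ^ m) - emb j (c ^ (2 ^ m))) * Q m c - x ^ (2 ^ m) \<in> M"
proof (induction m arbitrary: c)
  case 0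
  have "(x - emb j c) * Q 0 c - x = x * ((x - emb j c) * R c - 1)"
    unfolding Q_def by (simp add: algebra_simps)
  then show ?case using Mmult[OF R_inv] by simp
next
  case (Suc m)
  define A where "A = x ^ (2 ^ m)"
  define B where "B = emb j (c ^ (2 ^ m))"
  define P where "P = Q m c"
  define P' where "P' = Q m (c * om (Suc m))"
  define h where "h = emb j (1 / 2)"
  have IH1: "(A - B) * P - A \<in> M" using Suc[of c] unfolding A_def B_def P_def .
  have "emb j ((c * om (Suc m)) ^ 2 ^ m) = - B"
    unfolding B_def power_mult_distrib om_half by (simp add: emb_minus)
  then have IH2: "(A + B) * P' - A \<in> M" using Suc[of "c * om (Suc m)"] unfolding A_def P'_def by simp
  have tw: "2 ^ Suc m = 2 ^ m + (2::nat) ^ m" by simp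
  have xe: "x ^ 2 ^ Suc m = A * A" unfolding A_def tw by (rule power_add)
  have ce: "emb j (c ^ 2 ^ Suc m) = B * B" unfolding B_def tw power_add by (rule e_mult)
  have "(A * A - B * B) * (h * (P + P')) - A * A
      = h * ((A + B) * ((A - B) * P - A) + (A - B) * ((A + B) * P' - A)) + (h * (A * A + A * A) - A * A)"
    by (simp add: algebra_simps)
  also have "h * (A * A + A * A) - A * A = 0" unfolding h_def half by simp
  finally have "(A * A - B * B) * (h * (P + P')) - A * A
      = h * ((A + B) * ((A - B) * P - A) + (A - B) * ((A + B) * P' - A))" by simp
  also have "\<dots> \<in> M" using IH1 IH2 by (intro Mmult Madd) auto
  finally show ?case unfolding xe ce J2 h_def P_def P'_def .
qed

lemma idem: "Q (Suc m) c - Q m c * Q m (c * om (Suc m)) \<in> M"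
proof -
  define A where "A = x ^ (2 ^ m)"
  define B where "B = emb j (c ^ (2 ^ m))"
  define P where "P = Q m c"
  define P' where "P' = Q m (c * om (Suc m))"
  define Q2 where "Q2 = Q (Suc m) c"
  have IH1: "(A - B) * P - A \<in> M" using J1[of m c] unfolding A_def B_def P_def .
  have "emb j ((c * om (Suc m)) ^ 2 ^ m) = - B"
    unfolding B_def power_mult_distrib om_half by (simp add: emb_minus)
  then have IH2: "(A + B) * P' - A \<in> M" using J1[of m "c * om (Suc m)"] unfolding A_def P'_def by simp
  have tw: "2 ^ Suc m = 2 ^ m + (2::nat) ^ m" by simp
  have xe: "x ^ 2 ^ Suc m = A * A" unfolding A_def tw by (rule power_add)
  have ce: "emb j (c ^ 2 ^ Suc m) = B * B" unfolding B_def tw power_add by (rule e_mult)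
  have J: "(A * A - B * B) * Q2 - A * A \<in> M" using J1[of "Suc m" c] unfolding xe ce Q2_def .
  have "(A * A - B * B) * (Q2 - P * P') = ((A * A - B * B) * Q2 - A * A)
      - (((A - B) * P - A) * ((A + B) * P') + A * ((A + B) * P' - A))"
    by (simp add: algebra_simps)
  also have "\<dots> \<in> M" by (rule Mdiff[OF J Madd[OF Mmult2[OF IH1] Mmult[OF IH2]]])
  finally have D: "(A * A - B * B) * (Q2 - P * P') \<in> M" .
  have "A * A \<notin> M" unfolding xe[symmetric] by (rule power_notin[OF x_notin])
  have "A * A - B * B \<notin> M"
  proof
    assume "A * A - B * B \<in> M"
    from Mdiff[OF Mmult2[OF this, of Q2] J] have "A * A \<in> M" by simp
    with \<open>A * A \<notin> M\<close> show False by simp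
  qed
  from prime[OF D this] show ?thesis unfolding Q2_def P_def P'_def .
qed

lemma q_Q_sum: "q (Q m c) \<le> (1 / 2 ^ m) * (\<Sum>k<2 ^ m. q (x * R (c * om m ^ k)))"
proof -
  have "q (Q m c) \<le> cmod (1 / 2 ^ m) * q (\<Sum>k<2 ^ m. x * R (c * om m ^ k))"
    unfolding Q_def by (rule q_emb)
  also have "\<dots> \<le> (1 / 2 ^ m) * (\<Sum>k<2 ^ m. q (x * R (c * om m ^ k)))"
    by (intro mult_mono q_sum) (auto simp: norm_divide norm_power q_nonneg intro: sum_nonneg)
  finally show ?thesis .
qed

lemma avg_le: assumes "\<And>k. k < (2::nat) ^ m \<Longrightarrow> f k \<le> B"
  shows "(1 / 2 ^ m) * (\<Sum>k<2 ^ m. f k) \<le> (B::real)"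
proof -
  have "(\<Sum>k<2 ^ m. f k) \<le> (\<Sum>k<(2::nat) ^ m. B)" using assms by (intro sum_mono) auto
  also have "\<dots> = 2 ^ m * B" by simp
  finally show ?thesis by (simp add: field_simps)
qed

lemma Q_bound:
  assumes C: "\<And>d. cmod d \<le> r \<Longrightarrow> q (R d) \<le> C" and c: "cmod c \<le> r"
  shows "q (Q m c) \<le> norm x * C"
proof -
  have "q (x * R (c * om m ^ k)) \<le> norm x * C" for k
  proof -
    have "cmod (c * om m ^ k) \<le> r" using c by (simp add: norm_mult norm_power norm_om)
    then show ?thesis using q_mult[of x] q_le_norm[of x] C q_nonneg
      by (meson mult_mono norm_ge_zero order_trans)
  qed
  then show ?thesis using q_Q_sum[of m c] avg_le[of m "\<lambda>k. q (x * R (c * om m ^ k))"] by force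
qed

lemma Q_decay:
  assumes c: "2 * norm x \<le> cmod c" "c \<noteq> 0"
  shows "q (Q m c) \<le> norm x * (2 / cmod c)"
proof -
  have "q (x * R (c * om m ^ k)) \<le> norm x * (2 / cmod c)" for k
  proof -
    have n: "cmod (c * om m ^ k) = cmod c" by (simp add: norm_mult norm_power norm_om)
    have "q (R (c * om m ^ k)) \<le> 2 / cmod c"
      using qR_large[of "c * om m ^ k"] c n by (auto simp: om_def)
    then show ?thesis using q_mult[of x] q_le_norm[of x] q_nonneg
      by (meson mult_mono norm_ge_zero order_trans)
  qed
  then show ?thesis using q_Q_sum[of m c] avg_le[of m "\<lambda>k. q (x * R (c * om m ^ k))"] by force
qed

lemma Q_lip:
  assumes C: "\<And>d. cmod d \<le> r \<Longrightarrow> q (R d) \<le> C" and c: "cmod c \<le> r" and d: "cmod d \<le> r"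
  shows "q (Q m c - Q m d) \<le> norm x * C * C * cmod (c - d)"
proof -
  have "Q m c - Q m d = emb j (1 / 2 ^ m) * (\<Sum>k<2 ^ m. x * (R (c * om m ^ k) - R (d * om m ^ k)))"
    unfolding Q_def by (simp add: algebra_simps sum_subtractf)
  then have "q (Q m c - Q m d) \<le> cmod (1 / 2 ^ m) * q (\<Sum>k<2 ^ m. x * (R (c * om m ^ k) - R (d * om m ^ k)))"
    by (simp add: q_emb)
  also have "\<dots> \<le> (1 / 2 ^ m) * (\<Sum>k<2 ^ m. q (x * (R (c * om m ^ k) - R (d * om m ^ k))))"
    by (intro mult_mono q_sum) (auto simp: norm_divide norm_power q_nonneg intro: sum_nonneg)
  also have "\<dots> \<le> norm x * C * C * cmod (c - d)"
  proof (rule avg_le)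
    fix k
    have n1: "cmod (c * om m ^ k) \<le> r" using c by (simp add: norm_mult norm_power norm_om)
    have n2: "cmod (d * om m ^ k) \<le> r" using d by (simp add: norm_mult norm_power norm_om)
    have n3: "cmod (c * om m ^ k - d * om m ^ k) = cmod (c - d)"
      by (simp add: norm_mult norm_power norm_om flip: left_diff_distrib)
    have C0: "0 \<le> C" using C[OF c] q_nonneg[of "R c"] by simp
    have "q (x * (R (c * om m ^ k) - R (d * om m ^ k))) \<le> norm x * q (R (c * om m ^ k) - R (d * om m ^ k))"
      using q_mult q_le_norm q_nonneg by (meson mult_right_mono order_trans)
    also have "q (R (c * om m ^ k) - R (d * om m ^ k)) \<le> cmod (c - d) * C * C"
    proof -
      have "q (R (c * om m ^ k) - R (d * om m ^ k))
          \<le> cmod (c - d) * q (R (c * om m ^ k)) * q (R (d * om m ^ k))"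
        using qR_diff n3 by metis
      also have "\<dots> \<le> cmod (c - d) * C * C"
        using C[OF n1] C[OF n2] q_nonneg C0 by (intro mult_mono) auto
      finally show ?thesis .
    qed
    then have "norm x * q (R (c * om m ^ k) - R (d * om m ^ k)) \<le> norm x * (cmod (c - d) * C * C)"
      by (intro mult_left_mono) auto
    finally show "q (x * (R (c * om m ^ k) - R (d * om m ^ k))) \<le> norm x * C * C * cmod (c - d)"
      by (simp add: mult_ac)
  qed
  finally show ?thesis .
qed

lemma Q0: "Q m 0 - 1 \<in> M"
proof -
  have "Q m 0 = emb j (1 / 2 ^ m) * (emb j (2 ^ m) * (x * R 0))"
    unfolding Q_def using emb_of_nat[of j "2 ^ m"] by simp
  also have "\<dots> = x * R 0" by (simp add: mult.assoc[symmetric] flip: e_mult)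
  finally have "Q m 0 - 1 = (x - emb j 0) * R 0 - 1" by simp
  then show ?thesis using R_inv[of 0] by simp
qed

end

lemma le_lim0:
  fixes f :: "nat \<Rightarrow> real"
  assumes "f \<longlonglongrightarrow> 0" "\<And>m. a \<le> b + f m"
  shows "a \<le> b"
proof -
  have "(\<lambda>m. b + f m) \<longlonglongrightarrow> b + 0" by (intro tendsto_intros assms(1))
  then show ?thesis using assms(2) by (intro tendsto_le[of sequentially "\<lambda>m. b + f m" b "\<lambda>m. a" a]) auto
qed

context maxid
begin

lemma mod_complete:
  assumes Z: "\<And>m. q (Z (Suc m) - Z m) \<le> B * (1/2) ^ m"
  shows "\<exists>L. (\<lambda>m. q (Z m - L)) \<longlonglongrightarrow> 0"
proof -
  have "\<forall>k. \<exists>n\<in>M. norm ((Z (Suc k) - Z k) - n) < q (Z (Suc k) - Z k) + (1/2) ^ k"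
    using q_approx by simp
  then obtain n where n: "\<And>k. n k \<in> M"
    "\<And>k. norm ((Z (Suc k) - Z k) - n k) < q (Z (Suc k) - Z k) + (1/2) ^ k"
    by metis
  define d where "d k = (Z (Suc k) - Z k) - n k" for k
  have nd: "norm (d k) \<le> (\<bar>B\<bar> + 1) * (1/2) ^ k" for k
  proof -
    have "norm (d k) \<le> B * (1/2) ^ k + (1/2) ^ k" using n(2)[of k] Z[of k] unfolding d_def by simp
    also have "\<dots> \<le> (\<bar>B\<bar> + 1) * (1/2) ^ k" by (simp add: algebra_simps)
    finally show ?thesis .
  qed
  have "summable (\<lambda>k. (\<bar>B\<bar> + 1) * (1/2::real) ^ k)"
    by (intro summable_mult summable_geometric) simp
  then have sd: "summable d" using nd by (rule summable_comparison_test'[where N=0])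
  define L where "L = Z 0 + suminf d"
  have eq: "Z m - L - ((\<Sum>k<m. d k) - suminf d) = (\<Sum>k<m. n k)" for m
  proof -
    have "(\<Sum>k<m. d k) = (\<Sum>k<m. Z (Suc k) - Z k) - (\<Sum>k<m. n k)"
      unfolding d_def by (simp add: sum_subtractf)
    also have "(\<Sum>k<m. Z (Suc k) - Z k) = Z m - Z 0" by (rule sum_lessThan_telescope)
    finally show ?thesis unfolding L_def by simp
  qed
  have le: "q (Z m - L) \<le> norm ((\<Sum>k<m. d k) - suminf d)" for m
  proof -
    have "q (Z m - L) = q ((\<Sum>k<m. d k) - suminf d)"
      by (rule q_cong_eq) (unfold eq, rule Msum, rule n(1))
    also have "\<dots> \<le> norm ((\<Sum>k<m. d k) - suminf d)" by (rule q_le_norm)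
    finally show ?thesis .
  qed
  have "(\<lambda>m. (\<Sum>k<m. d k)) \<longlonglongrightarrow> suminf d" using sd by (rule summable_LIMSEQ)
  then have "(\<lambda>m. (\<Sum>k<m. d k) - suminf d) \<longlonglongrightarrow> 0"
    by (rule LIM_zero)
  then have g0: "(\<lambda>m. norm ((\<Sum>k<m. d k) - suminf d)) \<longlonglongrightarrow> 0"
    by (rule tendsto_norm_zero)
  have "\<forall>m. norm (q (Z m - L)) \<le> norm ((\<Sum>k<m. d k) - suminf d)"
  proof
    fix m show "norm (q (Z m - L)) \<le> norm ((\<Sum>k<m. d k) - suminf d)"
      using le[of m] q_nonneg[of "Z m - L"] by simp
  qed
  then have "(\<lambda>m. q (Z m - L)) \<longlonglongrightarrow> 0"
    by (rule Lim_null_comparison[OF always_eventually g0])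
  then show ?thesis by blast
qed

lemma q_M: "a \<in> M \<Longrightarrow> q a = 0" using q_zero_iff by simp

end

context gm
begin

lemma half_diff: "emb j (1 / 2) * (a + b) - a = emb j (1 / 2) * (b - a)"
proof -
  have "a = emb j (1 / 2) * (a + a)" by (rule half[symmetric])
  then have "emb j (1 / 2) * (a + b) - a = emb j (1 / 2) * (a + b) - emb j (1 / 2) * (a + a)" by simp
  also have "\<dots> = emb j (1 / 2) * (b - a)" by (simp add: algebra_simps)
  finally show ?thesis .
qed

lemma contradiction: False
proof -
  define r where "r = 2 * norm x + 1"
  have r: "r > 0" "2 * norm x < r" unfolding r_def by (auto intro: add_nonneg_pos)
  obtain C where C: "C > 0" "\<And>c. cmod c \<le> r \<Longrightarrow> q (R c) \<le> C" using qR_bound[of r] by blast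
  define K where "K = norm x * C * C"
  have K0: "K \<ge> 0" unfolding K_def using C by simp
  define B where "B = K * r * pi"
  have B0: "B \<ge> 0" unfolding B_def using K0 r by simp
  define Z where "Z \<rho> m = Q m (complex_of_real \<rho>)" for \<rho> m
  define Z' where "Z' \<rho> m = Q m (complex_of_real \<rho> * om (Suc m))" for \<rho> m
  have rot: "q (Z' \<rho> m - Z \<rho> m) \<le> B * (1/2) ^ m" if \<rho>: "\<rho> \<in> {0..r}" for \<rho> m
  proof -
    have n1: "cmod (complex_of_real \<rho> * om (Suc m)) \<le> r" using \<rho> by (simp add: norm_mult norm_om)
    have n2: "cmod (complex_of_real \<rho>) \<le> r" using \<rho> by simp
    have "q (Z' \<rho> m - Z \<rho> m) \<le> K * cmod (complex_of_real \<rho> * om (Suc m) - complex_of_real \<rho>)"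
      unfolding Z_def Z'_def K_def by (rule Q_lip[OF C(2) n1 n2])
    also have "cmod (complex_of_real \<rho> * om (Suc m) - complex_of_real \<rho>) = \<rho> * cmod (om (Suc m) - 1)"
    proof -
      have "complex_of_real \<rho> * om (Suc m) - complex_of_real \<rho> = complex_of_real \<rho> * (om (Suc m) - 1)"
        by (simp add: algebra_simps)
      then show ?thesis using \<rho> by (simp add: norm_mult)
    qed
    also have "\<dots> \<le> r * (2 * pi / 2 ^ Suc m)"
      using \<rho> om_close[of "Suc m"] by (intro mult_mono) auto
    also have "r * (2 * pi / 2 ^ Suc m) = r * pi * (1/2) ^ m" by (simp add: field_simps)
    finally show ?thesis using K0 unfolding B_def by (simp add: mult_left_mono mult.assoc)
  qed
  have step: "q (Z \<rho> (Suc m) - Z \<rho> m) \<le> B * (1/2) ^ m" if \<rho>: "\<rho> \<in> {0..r}" for \<rho> m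
  proof -
    have "Z \<rho> (Suc m) - Z \<rho> m = emb j (1 / 2) * (Z' \<rho> m - Z \<rho> m)"
      unfolding Z_def Z'_def J2 half_diff ..
    then have "q (Z \<rho> (Suc m) - Z \<rho> m) \<le> cmod (1 / 2) * q (Z' \<rho> m - Z \<rho> m)"
      using q_emb[of "1 / 2" "Z' \<rho> m - Z \<rho> m"] by (simp only:)
    also have "\<dots> \<le> q (Z' \<rho> m - Z \<rho> m)" using q_nonneg by simp
    finally show ?thesis using rot[OF \<rho>, of m] by linarith
  qed
  have "\<forall>\<rho>\<in>{0..r}. \<exists>L. (\<lambda>m. q (Z \<rho> m - L)) \<longlonglongrightarrow> 0"
    using step mod_complete by blast
  then obtain Lim where Lim: "\<And>\<rho>. \<rho> \<in> {0..r} \<Longrightarrow> (\<lambda>m. q (Z \<rho> m - Lim \<rho>)) \<longlonglongrightarrow> 0"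
    by metis
  have Zb: "q (Z \<rho> m) \<le> norm x * C" if "\<rho> \<in> {0..r}" for \<rho> m
    unfolding Z_def using that by (intro Q_bound[OF C(2)]) auto
  have lip: "q (Lim \<rho> - Lim \<sigma>) \<le> K * \<bar>\<rho> - \<sigma>\<bar>" if "\<rho> \<in> {0..r}" "\<sigma> \<in> {0..r}" for \<rho> \<sigma>
  proof (rule le_lim0)
    show "(\<lambda>m. q (Z \<rho> m - Lim \<rho>) + q (Z \<sigma> m - Lim \<sigma>)) \<longlonglongrightarrow> 0"
      using tendsto_add[OF Lim[OF that(1)] Lim[OF that(2)]] by simp
    fix m
    have "q (Lim \<rho> - Lim \<sigma>) \<le> q (Lim \<rho> - Z \<rho> m) + q (Z \<rho> m - Lim \<sigma>)" by (rule q_diff_tri)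
    also have "q (Z \<rho> m - Lim \<sigma>) \<le> q (Z \<rho> m - Z \<sigma> m) + q (Z \<sigma> m - Lim \<sigma>)" by (rule q_diff_tri)
    also have "q (Z \<rho> m - Z \<sigma> m) \<le> K * cmod (complex_of_real \<rho> - complex_of_real \<sigma>)"
      unfolding Z_def K_def using that by (intro Q_lip[OF C(2)]) auto
    also have "q (Lim \<rho> - Z \<rho> m) = q (Z \<rho> m - Lim \<rho>)" using q_minus[of "Z \<rho> m - Lim \<rho>"] by simp
    finally show "q (Lim \<rho> - Lim \<sigma>) \<le> K * \<bar>\<rho> - \<sigma>\<bar> + (q (Z \<rho> m - Lim \<rho>) + q (Z \<sigma> m - Lim \<sigma>))"
      by (simp flip: of_real_diff)
  qed
  have two: "q (Lim \<rho>) = 0 \<or> q (Lim \<rho>) = q 1" if \<rho>: "\<rho> \<in> {0..r}" for \<rho>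
  proof -
    define L where "L = Lim \<rho>"
    define a where "a m = q (Z \<rho> m - L)" for m
    have a: "a \<longlonglongrightarrow> 0" unfolding a_def L_def using Lim[OF \<rho>] .
    have "q (L - L * L) \<le> 0"
    proof (rule le_lim0)
      show "(\<lambda>m. a (Suc m) + (norm x * C * (B * (1/2) ^ m + a m) + a m * q L)) \<longlonglongrightarrow> 0"
      proof -
        have a1: "(\<lambda>m. a (Suc m)) \<longlonglongrightarrow> 0" using LIMSEQ_Suc[OF a] .
        have p: "(\<lambda>m. (1/2::real) ^ m) \<longlonglongrightarrow> 0" by (rule LIMSEQ_power_zero) simp
        have "(\<lambda>m. a (Suc m) + (norm x * C * (B * (1/2) ^ m + a m) + a m * q L)) \<longlonglongrightarrow>
            0 + (norm x * C * (B * 0 + 0) + 0 * q L)"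
          by (intro tendsto_add tendsto_mult tendsto_const a1 p a)
        then show ?thesis by simp
      qed
      fix m
      have "q (L - L * L) \<le> q (L - Z \<rho> (Suc m)) + q (Z \<rho> (Suc m) - L * L)" by (rule q_diff_tri)
      also have "q (Z \<rho> (Suc m) - L * L) \<le> q (Z \<rho> (Suc m) - Z \<rho> m * Z' \<rho> m) + q (Z \<rho> m * Z' \<rho> m - L * L)"
        by (rule q_diff_tri)
      also have "q (Z \<rho> (Suc m) - Z \<rho> m * Z' \<rho> m) = 0"
        unfolding Z_def Z'_def by (rule q_M[OF idem])
      also have "Z \<rho> m * Z' \<rho> m - L * L = Z \<rho> m * (Z' \<rho> m - L) + (Z \<rho> m - L) * L"
        by (simp add: algebra_simps)
      also have "q \<dots> \<le> q (Z \<rho> m * (Z' \<rho> m - L)) + q ((Z \<rho> m - L) * L)" by (rule q_add)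
      also have "q (Z \<rho> m * (Z' \<rho> m - L)) \<le> q (Z \<rho> m) * q (Z' \<rho> m - L)" by (rule q_mult)
      also have "\<dots> \<le> (norm x * C) * (B * (1/2) ^ m + a m)"
      proof (rule mult_mono)
        show "q (Z \<rho> m) \<le> norm x * C" by (rule Zb[OF \<rho>])
        have "q (Z' \<rho> m - L) \<le> q (Z' \<rho> m - Z \<rho> m) + q (Z \<rho> m - L)" by (rule q_diff_tri)
        then show "q (Z' \<rho> m - L) \<le> B * (1/2) ^ m + a m" using rot[OF \<rho>, of m] unfolding a_def by simp
        show "0 \<le> norm x * C" using C by simp
        show "0 \<le> q (Z' \<rho> m - L)" by (rule q_nonneg)
      qed
      also have "q ((Z \<rho> m - L) * L) \<le> a m * q L" unfolding a_def by (rule q_mult)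
      also have "q (L - Z \<rho> (Suc m)) = a (Suc m)" unfolding a_def using q_minus[of "Z \<rho> (Suc m) - L"] by simp
      finally show "q (L - L * L) \<le> 0 + (a (Suc m) + (norm x * C * (B * (1/2) ^ m + a m) + a m * q L))"
        by simp
    qed
    then have "L - L * L \<in> M" using q_nonneg[of "L - L * L"] q_zero_iff by (metis order_antisym)
    then have "L * (1 - L) \<in> M" by (simp add: algebra_simps)
    then have "L \<in> M \<or> 1 - L \<in> M" using prime by blast
    then show ?thesis
    proof
      assume "L \<in> M" then show ?thesis unfolding L_def using q_M by simp
    next
      assume "1 - L \<in> M"
      then have "L - 1 \<in> M" using Mneg by fastforce
      then show ?thesis unfolding L_def using q_cong_eq by simp
    qed
  qed
  have zero: "q (Lim 0) = q 1"
  proof -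
    define L where "L = Lim 0"
    have "(\<lambda>m. q (Z 0 m - L)) \<longlonglongrightarrow> 0" unfolding L_def using Lim[of 0] r by simp
    moreover have "q (Z 0 m - L) = q (1 - L)" for m
      by (rule q_cong_eq) (use Q0[of m] in \<open>simp add: Z_def\<close>)
    ultimately have "(\<lambda>m. q (1 - L)) \<longlonglongrightarrow> 0" by simp
    then have "q (1 - L) = 0" by (simp add: LIMSEQ_const_iff)
    then have "1 - L \<in> M" using q_zero_iff by simp
    then have "L - 1 \<in> M" using Mneg by fastforce
    then show ?thesis unfolding L_def using q_cong_eq by simp
  qed
  have far: "q (Lim r) \<le> norm x * (2 / r)"
  proof (rule le_lim0)
    show "(\<lambda>m. q (Z r m - Lim r)) \<longlonglongrightarrow> 0" using Lim[of r] r by simp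
    fix m
    have "q (Lim r) \<le> q (Lim r - Z r m) + q (Z r m)" using q_add[of "Lim r - Z r m" "Z r m"] by simp
    also have "q (Z r m) \<le> norm x * (2 / r)"
      unfolding Z_def using Q_decay[of "complex_of_real r" m] r by simp
    also have "q (Lim r - Z r m) = q (Z r m - Lim r)" using q_minus[of "Z r m - Lim r"] by simp
    finally show "q (Lim r) \<le> norm x * (2 / r) + q (Z r m - Lim r)" by simp
  qed
  have "norm x * (2 / r) < 1" using r by (simp add: field_simps)
  with far q_one have "q (Lim r) < q 1" by simp
  then have gr: "q (Lim r) = 0" using two[of r] r by auto
  have cont: "continuous_on {0..r} (\<lambda>\<rho>. q (Lim \<rho>))"
    unfolding continuous_on_iff
  proof (intro ballI allI impI)
    fix \<sigma> e assume \<sigma>: "\<sigma> \<in> {0..r}" and e: "(e::real) > 0"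
    show "\<exists>d>0. \<forall>\<rho>\<in>{0..r}. dist \<rho> \<sigma> < d \<longrightarrow> dist (q (Lim \<rho>)) (q (Lim \<sigma>)) < e"
    proof (intro exI[of _ "e / (K + 1)"] conjI ballI impI)
      show "e / (K + 1) > 0" using e K0 by simp
      fix \<rho> assume \<rho>: "\<rho> \<in> {0..r}" and d: "dist \<rho> \<sigma> < e / (K + 1)"
      have "dist (q (Lim \<rho>)) (q (Lim \<sigma>)) \<le> q (Lim \<rho> - Lim \<sigma>)" using q_lip by (simp add: dist_real_def)
      also have "\<dots> \<le> K * \<bar>\<rho> - \<sigma>\<bar>" by (rule lip[OF \<rho> \<sigma>])
      also have "\<dots> \<le> K * (e / (K + 1))" using d K0 by (intro mult_left_mono) (auto simp: dist_real_def)
      also have "\<dots> < e" using e K0 by (simp add: field_simps)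
      finally show "dist (q (Lim \<rho>)) (q (Lim \<sigma>)) < e" .
    qed
  qed
  have "\<exists>\<rho>. 0 \<le> \<rho> \<and> \<rho> \<le> r \<and> q (Lim \<rho>) = 1/2"
    using q_one zero gr r by (intro IVT2'[OF _ _ _ cont]) auto
  then obtain \<rho> where "\<rho> \<in> {0..r}" "q (Lim \<rho>) = 1/2" by auto
  with two[of \<rho>] q_one show False by auto
qed

end

context maxid
begin

lemma gelfand_mazur: "\<exists>c. a - emb j c \<in> M"
proof (rule ccontr)
  assume "\<not> ?thesis"
  then have "\<And>c. a - emb j c \<notin> M" by blast
  then interpret gm j M a by unfold_locales
  show False by (rule contradiction)
qed

definition chi :: "'a \<Rightarrow> complex" where "chi a = (SOME c. a - emb j c \<in> M)"

lemma chi: "a - emb j (chi a) \<in> M"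
  unfolding chi_def using gelfand_mazur by (rule someI_ex)

lemma chi_unique: assumes "a - emb j c \<in> M" shows "chi a = c"
proof (rule ccontr)
  assume ne: "chi a \<noteq> c"
  have "emb j (c - chi a) = (a - emb j (chi a)) - (a - emb j c)" by (simp add: emb_diff)
  also have "\<dots> \<in> M" using chi assms by (rule Mdiff)
  finally have "emb j (1 / (c - chi a)) * emb j (c - chi a) \<in> M" by (rule Mmult)
  then have "1 \<in> M" using e_inv[of "c - chi a"] ne by (simp add: mult.commute)
  with one_notin show False by simp
qed

lemma chi_char: "chi \<in> characters j"
  unfolding characters_def
proof (intro CollectI conjI allI)
  fix a b
  show "chi (a + b) = chi a + chi b"
    by (rule chi_unique) (use Madd[OF chi[of a] chi[of b]] in \<open>simp add: emb_add algebra_simps\<close>)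
  have "a * b - emb j (chi a * chi b) = (a - emb j (chi a)) * b + emb j (chi a) * (b - emb j (chi b))"
    by (simp add: e_mult algebra_simps)
  also have "\<dots> \<in> M" using Madd[OF Mmult2[OF chi[of a]] Mmult[OF chi[of b]]] .
  finally show "chi (a * b) = chi a * chi b" by (rule chi_unique)
next
  fix r :: real and a
  have "r *\<^sub>R a - emb j (complex_of_real r * chi a) = emb j (complex_of_real r) * (a - emb j (chi a))"
    by (simp add: e_mult algebra_simps emb_of_real)
  also have "\<dots> \<in> M" by (rule Mmult[OF chi])
  finally show "chi (r *\<^sub>R a) = complex_of_real r * chi a" by (rule chi_unique)
next
  show "chi 1 = 1" by (rule chi_unique) (simp add: M0)
  show "chi j = \<i>" by (rule chi_unique) (simp add: M0)
qed

end

lemma characters_nonempty: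
  assumes cb: "complex_banach_algebra j" and ss: "semisimple TYPE('a::{real_normed_algebra_1,banach,comm_ring_1})"
  shows "characters (j::'a) \<noteq> {}"
proof -
  have "\<exists>M::'a set. maximal_ideal M"
  proof (rule ccontr)
    assume "\<not> ?thesis"
    then have e: "{I :: 'a set. maximal_ideal I} = {}" by auto
    have "\<Inter>{I :: 'a set. maximal_ideal I} = {0}" using ss unfolding semisimple_def by simp
    then have "(UNIV :: 'a set) = {0}" unfolding e by simp
    then have "(1::'a) = 0" by (metis UNIV_I singletonD)
    then show False by simp
  qed
  then obtain M :: "'a set" where "maximal_ideal M" by blast
  then interpret maxid j M using cb by unfold_locales
  show ?thesis using chi_char by blast
qed

abbreviation PT :: "('a \<Rightarrow> complex) topology" where
  "PT \<equiv> product_topology (\<lambda>_. euclidean) UNIV"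

lemma PT_top: "topspace PT = UNIV" by (simp add: topspace_product_topology)

lemma PT_proj: "continuous_map PT euclidean (\<lambda>h. h a)"
  using continuous_map_product_projection[of a UNIV "\<lambda>_. euclidean"] by simp

lemma cmap_cmult:
  fixes f g :: "'b \<Rightarrow> complex"
  shows "continuous_map X euclidean f \<Longrightarrow> continuous_map X euclidean g \<Longrightarrow> continuous_map X euclidean (\<lambda>x. f x * g x)"
  by (simp add: continuous_map_atin tendsto_mult)

lemma PT_closed_eq:
  assumes "continuous_map PT euclidean (F :: ('a \<Rightarrow> complex) \<Rightarrow> complex)"
  shows "closedin PT {h. F h = 0}"
  using closedin_continuous_map_preimage[OF assms, of "{0}"] by (simp add: PT_top)

lemma PT_closed_all:
  assumes "\<And>i. closedin PT (S i)"
  shows "closedin PT {h. \<forall>i. h \<in> S i}"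
proof -
  have "{h. \<forall>i. h \<in> S i} = \<Inter> (range S)" by auto
  moreover have "closedin PT (\<Inter> (range S))" by (rule closedin_Inter) (use assms in auto)
  ultimately show ?thesis by simp
qed

lemma chars_closed: "closedin PT (characters (j::'a::{real_normed_algebra_1,comm_ring_1}))"
proof -
  have "closedin PT {h. \<forall>p. h \<in> {h. h (fst p + snd p) - (h (fst p) + h (snd p)) = 0}}"
    by (rule PT_closed_all) (intro PT_closed_eq continuous_map_diff continuous_map_add PT_proj)
  then have c1: "closedin PT {h. \<forall>p. h (fst p + snd p) - (h (fst p) + h (snd p)) = 0}" by simp
  have "closedin PT {h. \<forall>p. h \<in> {h. h (fst p * snd p) - h (fst p) * h (snd p) = 0}}"
    by (rule PT_closed_all) (intro PT_closed_eq continuous_map_diff cmap_cmult PT_proj)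
  then have c2: "closedin PT {h. \<forall>p. h (fst p * snd p) - h (fst p) * h (snd p) = 0}" by simp
  have "closedin PT {h. \<forall>p. h \<in> {h. h (fst p *\<^sub>R snd p) - complex_of_real (fst p) * h (snd p) = 0}}"
    by (rule PT_closed_all) (intro PT_closed_eq continuous_map_diff cmap_cmult PT_proj continuous_map_canonical_const)
  then have c3: "closedin PT {h. \<forall>p. h (fst p *\<^sub>R snd p) - complex_of_real (fst p) * h (snd p) = 0}" by simp
  have c4: "closedin PT {h. h 1 - 1 = 0}"
    by (intro PT_closed_eq continuous_map_diff PT_proj continuous_map_canonical_const)
  have c5: "closedin PT {h. h j - \<i> = 0}"
    by (intro PT_closed_eq continuous_map_diff PT_proj continuous_map_canonical_const)
  have "characters j = {h. \<forall>p. h (fst p + snd p) - (h (fst p) + h (snd p)) = 0}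
      \<inter> {h. \<forall>p. h (fst p * snd p) - h (fst p) * h (snd p) = 0}
      \<inter> {h. \<forall>p. h (fst p *\<^sub>R snd p) - complex_of_real (fst p) * h (snd p) = 0}
      \<inter> {h. h 1 - 1 = 0} \<inter> {h. h j - \<i> = 0}"
    unfolding characters_def by auto
  then show ?thesis by (simp only:) (intro closedin_Int c1 c2 c3 c4 c5)
qed

lemma chars_compact:
  assumes cb: "complex_banach_algebra (j::'a::{real_normed_algebra_1,banach,comm_ring_1})"
  shows "compactin PT (characters j)"
proof (rule closed_compactin[OF _ _ chars_closed])
  show "compactin PT (PiE UNIV (\<lambda>a. cball 0 (norm a)))"
    by (simp add: compactin_PiE)
  show "characters j \<subseteq> PiE UNIV (\<lambda>a. cball 0 (norm a))"
    using char_bound[OF cb] by (auto simp: PiE_UNIV_domain)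
qed

lemma chars_boundary:
  assumes cb: "complex_banach_algebra (j::'a::{real_normed_algebra_1,banach,comm_ring_1})"
    and ss: "semisimple TYPE('a)"
  shows "is_boundary j (characters j)"
  unfolding is_boundary_def
proof (intro conjI allI)
  fix f :: 'a
  have "compactin euclidean ((\<lambda>h. cmod (h f)) ` characters j)"
    by (rule image_compactin[OF chars_compact[OF cb]]) (intro continuous_map_norm PT_proj)
  then have "compact ((\<lambda>h. cmod (h f)) ` characters j)" by simp
  moreover have "(\<lambda>h. cmod (h f)) ` characters j \<noteq> {}" using characters_nonempty[OF cb ss] by simp
  ultimately obtain s where "s \<in> (\<lambda>h. cmod (h f)) ` characters j" "\<forall>t\<in>(\<lambda>h. cmod (h f)) ` characters j. t \<le> s"
    using compact_attains_sup by blast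
  then show "\<exists>m\<in>characters j. \<forall>m'\<in>characters j. cmod (m' f) \<le> cmod (m f)" by auto
qed simp

lemma shilov_sub:
  assumes cb: "complex_banach_algebra (j::'a::{real_normed_algebra_1,banach,comm_ring_1})"
    and ss: "semisimple TYPE('a)"
  shows "shilov_boundary j \<subseteq> characters j"
proof -
  have "closedin (gelfand_top j) (characters j)"
    unfolding gelfand_top_def by (metis closedin_topspace inf.idem PT_top topspace_subtopology inf_top_left)
  then show ?thesis unfolding shilov_boundary_def using chars_boundary[OF cb ss] by blast
qed

locale mainloc =
  fixes j w :: "'a::{real_normed_algebra_1,banach,comm_ring_1}" and U :: "'a \<Rightarrow> 'a" and c :: complex
  assumes cb: "complex_banach_algebra j"
    and ss: "semisimple TYPE('a)"
    and aut: "alg_automorphism j U"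
    and bijT: "bij (\<lambda>f. w * U f - cscale j c f)"
    and notap: "c \<notin> fun_ap_spectrum (shilov_boundary j) (check_algebra j) (check_op j w U)"
begin

abbreviation S where "S \<equiv> shilov_boundary j"
abbreviation X where "X \<equiv> check_algebra j"
definition Lc where "Lc g = (\<lambda>t. check_op j w U g t - c * g t)"
definition Tc where "Tc f = w * U f - cscale j c f"
definition chk where "chk f = (\<lambda>t. if t \<in> S then t f else 0)"

lemma S_char: "t \<in> S \<Longrightarrow> t \<in> characters j" using shilov_sub[OF cb ss] by blast
lemma S_phi: "t \<in> S \<Longrightarrow> t \<circ> U \<in> S" by (rule shilov_phi[OF aut])

lemma tw_bound: "t \<in> S \<Longrightarrow> cmod (t a) \<le> norm a" using char_bound[OF cb S_char] .

lemma X_zero: "g \<in> X \<Longrightarrow> t \<notin> S \<Longrightarrow> g t = 0" unfolding check_algebra_def by auto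
lemma X_approx: "g \<in> X \<Longrightarrow> e > 0 \<Longrightarrow> \<exists>f. \<forall>t\<in>S. cmod (g t - t f) < e"
  unfolding check_algebra_def by auto
lemma X_intro: "(\<And>t. t \<notin> S \<Longrightarrow> g t = 0) \<Longrightarrow> (\<And>e. e > 0 \<Longrightarrow> \<exists>f. \<forall>t\<in>S. cmod (g t - t f) < e) \<Longrightarrow> g \<in> X"
  unfolding check_algebra_def by auto

lemma chk_X: "chk f \<in> X"
proof (rule X_intro)
  show "t \<notin> S \<Longrightarrow> chk f t = 0" for t by (simp add: chk_def)
  show "\<exists>f'. \<forall>t\<in>S. cmod (chk f t - t f') < e" if "e > 0" for e
    using that by (intro exI[of _ f]) (simp add: chk_def)
qed

lemma Lc_chk: "Lc (chk f) = chk (Tc f)"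
proof
  fix t
  show "Lc (chk f) t = chk (Tc f) t"
  proof (cases "t \<in> S")
    case True
    note ch = char_basic[OF S_char[OF True]]
    have "Lc (chk f) t = t w * t (U f) - c * t f"
      unfolding Lc_def check_op_def chk_def using True S_phi[OF True] by simp
    also have "\<dots> = t (Tc f)" unfolding Tc_def ch by simp
    finally show ?thesis using True by (simp add: chk_def)
  qed (simp add: Lc_def check_op_def chk_def)
qed

lemma X_bounded: assumes "g \<in> X" shows "\<exists>B. \<forall>t\<in>S. cmod (g t) \<le> B"
proof -
  obtain f where f: "\<forall>t\<in>S. cmod (g t - t f) < 1" using X_approx[OF assms, of 1] by auto
  have "cmod (g t) \<le> 1 + norm f" if "t \<in> S" for t
  proof -
    have "cmod (g t) \<le> cmod (g t - t f) + cmod (t f)" by (metis diff_add_cancel norm_triangle_ineq)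
    then show ?thesis using f that tw_bound[OF that, of f] by fastforce
  qed
  then show ?thesis by blast
qed

lemma X_diff: assumes "g1 \<in> X" "g2 \<in> X" shows "(\<lambda>t. g1 t - g2 t) \<in> X"
proof (rule X_intro)
  show "t \<notin> S \<Longrightarrow> g1 t - g2 t = 0" for t using X_zero[OF assms(1)] X_zero[OF assms(2)] by simp
  fix e :: real assume "e > 0"
  then have e2: "e / 2 > 0" by simp
  obtain f1 where f1: "\<forall>t\<in>S. cmod (g1 t - t f1) < e / 2" using X_approx[OF assms(1) e2] by blast
  obtain f2 where f2: "\<forall>t\<in>S. cmod (g2 t - t f2) < e / 2" using X_approx[OF assms(2) e2] by blast
  show "\<exists>f. \<forall>t\<in>S. cmod (g1 t - g2 t - t f) < e"
  proof (intro exI ballI)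
    fix t assume t: "t \<in> S"
    have "g1 t - g2 t - t (f1 - f2) = (g1 t - t f1) - (g2 t - t f2)"
      using char_basic(3)[OF S_char[OF t]] by simp
    also have "cmod \<dots> \<le> cmod (g1 t - t f1) + cmod (g2 t - t f2)" by (rule norm_triangle_ineq4)
    finally show "cmod (g1 t - g2 t - t (f1 - f2)) < e" using f1 f2 t by fastforce
  qed
qed

lemma X_scale: assumes "g \<in> X" shows "(\<lambda>t. a * g t) \<in> X"
proof (rule X_intro)
  show "t \<notin> S \<Longrightarrow> a * g t = 0" for t using X_zero assms by simp
  fix e :: real assume e: "e > 0"
  have a1: "cmod a + 1 > 0" by (simp add: add_nonneg_pos)
  then have e2: "e / (cmod a + 1) > 0" using e by simp
  obtain f where f: "\<forall>t\<in>S. cmod (g t - t f) < e / (cmod a + 1)" using X_approx[OF assms e2] by blast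
  show "\<exists>f. \<forall>t\<in>S. cmod (a * g t - t f) < e"
  proof (intro exI ballI)
    fix t assume t: "t \<in> S"
    have "a * g t - t (cscale j a f) = a * (g t - t f)"
      using char_basic(4)[OF S_char[OF t]] by (simp add: algebra_simps)
    also have "cmod \<dots> = cmod a * cmod (g t - t f)" by (simp add: norm_mult)
    also have "\<dots> \<le> cmod a * (e / (cmod a + 1))" using f t by (intro mult_left_mono) auto
    also have "\<dots> < (cmod a + 1) * (e / (cmod a + 1))" using e2 by (intro mult_strict_right_mono) auto
    also have "\<dots> = e" using a1 by simp
    finally show "cmod (a * g t - t (cscale j a f)) < e" .
  qed
qed

lemma Lc_diff: "Lc (\<lambda>t. g1 t - g2 t) = (\<lambda>t. Lc g1 t - Lc g2 t)"
  unfolding Lc_def check_op_def by (auto simp: algebra_simps)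

lemma Lc_scale: "Lc (\<lambda>t. a * g t) = (\<lambda>t. a * Lc g t)"
  unfolding Lc_def check_op_def by (auto simp: algebra_simps)

lemma Lc_X: assumes "g \<in> X" shows "Lc g \<in> X"
proof (rule X_intro)
  show "t \<notin> S \<Longrightarrow> Lc g t = 0" for t using X_zero assms unfolding Lc_def check_op_def by simp
  fix e :: real assume e: "e > 0"
  define K where "K = norm w + cmod c + 1"
  have K: "K > 0" unfolding K_def by (simp add: add_nonneg_pos)
  obtain f where f: "\<forall>t\<in>S. cmod (g t - t f) < e / K" using X_approx[OF assms, of "e / K"] e K by auto
  show "\<exists>f. \<forall>t\<in>S. cmod (Lc g t - t f) < e"
  proof (intro exI ballI)
    fix t assume t: "t \<in> S"
    have tU: "t \<circ> U \<in> S" by (rule S_phi[OF t])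
    have "Lc g t - t (Tc f) = Lc g t - Lc (chk f) t" using Lc_chk[of f] t by (simp add: chk_def)
    also have "\<dots> = t w * (g (t \<circ> U) - (t \<circ> U) f) - c * (g t - t f)"
      unfolding Lc_def check_op_def chk_def using t tU by (simp add: algebra_simps)
    also have "cmod \<dots> \<le> cmod (t w) * cmod (g (t \<circ> U) - (t \<circ> U) f) + cmod c * cmod (g t - t f)"
      by (metis norm_mult norm_triangle_ineq4)
    also have "\<dots> \<le> norm w * (e / K) + cmod c * (e / K)"
      using f t tU tw_bound[OF t, of w] by (intro add_mono mult_mono) auto
    also have "\<dots> = (K - 1) * (e / K)" unfolding K_def by (simp only: distrib_right[symmetric]) simp
    also have "\<dots> < K * (e / K)" using e K by (intro mult_strict_right_mono) auto
    also have "\<dots> = e" using K by simp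
    finally show "cmod (Lc g t - t (Tc f)) < e" .
  qed
qed

end

context mainloc
begin

lemma eps: "\<exists>\<epsilon>>0. \<forall>g\<in>X. sup_norm S g = 1 \<longrightarrow> \<epsilon> \<le> sup_norm S (Lc g)"
proof -
  have "\<not> (\<forall>e>0. \<exists>g\<in>X. sup_norm S g = 1 \<and> sup_norm S (Lc g) < e)"
    using notap unfolding fun_ap_spectrum_def Lc_def by simp
  then show ?thesis by (auto simp: not_less)
qed

lemma BB: "\<exists>\<epsilon>>0. \<forall>g\<in>X. \<forall>Mb. (\<forall>t\<in>S. cmod (Lc g t) \<le> Mb) \<longrightarrow> (\<forall>t\<in>S. cmod (g t) \<le> Mb / \<epsilon>)"
proof -
  obtain \<epsilon> where \<epsilon>: "\<epsilon> > 0" "\<And>g. g \<in> X \<Longrightarrow> sup_norm S g = 1 \<Longrightarrow> \<epsilon> \<le> sup_norm S (Lc g)"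
    using eps by blast
  have "\<forall>t\<in>S. cmod (g t) \<le> Mb / \<epsilon>" if g: "g \<in> X" and hM: "\<forall>t\<in>S. cmod (Lc g t) \<le> Mb" for g Mb
  proof (cases "S = {}")
    case True then show ?thesis by simp
  next
    case Sne: False
    obtain B where B: "\<forall>t\<in>S. cmod (g t) \<le> B" using X_bounded[OF g] by blast
    have bdd: "bdd_above ((\<lambda>t. cmod (g t)) ` S)" using B by (auto intro: bdd_aboveI2)
    define s where "s = sup_norm S g"
    have gs: "cmod (g t) \<le> s" if "t \<in> S" for t
      unfolding s_def sup_norm_def using bdd that by (rule cSUP_upper2) simp
    have s0: "s \<ge> 0" using gs Sne norm_ge_zero by (metis all_not_in_conv order_trans)
    have M0: "Mb \<ge> 0" using hM Sne norm_ge_zero by (metis all_not_in_conv order_trans)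
    show ?thesis
    proof (cases "s = 0")
      case True
      then show ?thesis using gs M0 \<epsilon>(1) by (metis divide_nonneg_pos order_trans)
    next
      case False
      then have sp: "s > 0" using s0 by simp
      define g' where "g' = (\<lambda>t. complex_of_real (1 / s) * g t)"
      have g'X: "g' \<in> X" unfolding g'_def by (rule X_scale[OF g])
      have ng': "cmod (g' t) = cmod (g t) / s" for t unfolding g'_def using sp by (simp add: norm_mult norm_divide)
      have "sup_norm S g' = 1"
      proof (rule antisym)
        show "sup_norm S g' \<le> 1" unfolding sup_norm_def ng'
          using gs sp Sne by (intro cSUP_least) auto
        have bdd': "bdd_above ((\<lambda>t. cmod (g' t)) ` S)" unfolding ng' using gs sp
          by (intro bdd_aboveI2[where M=1]) auto
        have "cmod (g t) \<le> s * sup_norm S g'" if "t \<in> S" for t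
        proof -
          have "cmod (g' t) \<le> sup_norm S g'" unfolding sup_norm_def using bdd' that by (rule cSUP_upper2) simp
          then show ?thesis unfolding ng' using sp by (simp add: field_simps)
        qed
        then have "s \<le> s * sup_norm S g'" unfolding s_def sup_norm_def using Sne
          by (intro cSUP_least) (auto simp: s_def sup_norm_def)
        then show "1 \<le> sup_norm S g'" using sp by simp
      qed
      then have "\<epsilon> \<le> sup_norm S (Lc g')" using \<epsilon>(2)[OF g'X] by simp
      also have "sup_norm S (Lc g') \<le> Mb / s"
        unfolding sup_norm_def g'_def Lc_scale using Sne hM sp
        by (intro cSUP_least) (auto simp: norm_mult norm_divide divide_right_mono)
      finally have "s \<le> Mb / \<epsilon>" using sp \<epsilon>(1) by (simp add: field_simps)
      then show ?thesis using gs by (meson order_trans)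
    qed
  qed
  then show ?thesis using \<epsilon>(1) by blast
qed

end

context mainloc
begin

lemma Lc_inj: "inj_on Lc X"
proof (rule inj_onI)
  fix g1 g2 assume g: "g1 \<in> X" "g2 \<in> X" and eq: "Lc g1 = Lc g2"
  obtain \<epsilon> where \<epsilon>: "\<epsilon> > 0" "\<forall>g\<in>X. \<forall>Mb. (\<forall>t\<in>S. cmod (Lc g t) \<le> Mb) \<longrightarrow> (\<forall>t\<in>S. cmod (g t) \<le> Mb / \<epsilon>)"
    using BB by blast
  have d: "(\<lambda>t. g1 t - g2 t) \<in> X" by (rule X_diff[OF g])
  have "\<forall>t\<in>S. cmod (Lc (\<lambda>t. g1 t - g2 t) t) \<le> 0" unfolding Lc_diff eq by simp
  then have "\<forall>t\<in>S. cmod (g1 t - g2 t) \<le> 0 / \<epsilon>" using \<epsilon>(2) d by blast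
  then have "\<forall>t\<in>S. g1 t = g2 t" by simp
  moreover have "\<forall>t. t \<notin> S \<longrightarrow> g1 t = g2 t" using X_zero[OF g(1)] X_zero[OF g(2)] by simp
  ultimately show "g1 = g2" by blast
qed

lemma Lc_surj: assumes g: "g \<in> X" shows "g \<in> Lc ` X"
proof -
  obtain \<epsilon> where \<epsilon>: "\<epsilon> > 0" "\<forall>g\<in>X. \<forall>Mb. (\<forall>t\<in>S. cmod (Lc g t) \<le> Mb) \<longrightarrow> (\<forall>t\<in>S. cmod (g t) \<le> Mb / \<epsilon>)"
    using BB by blast
  define iv where "iv n = inverse (real (Suc n))" for n
  have iv0: "iv \<longlonglongrightarrow> 0" unfolding iv_def by (rule LIMSEQ_inverse_real_of_nat)
  have ivp: "iv n > 0" for n unfolding iv_def by simp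
  have ivm: "m \<ge> n \<Longrightarrow> iv m \<le> iv n" for m n unfolding iv_def by (simp add: le_imp_inverse_le)
  have "\<forall>n. \<exists>f'. \<forall>t\<in>S. cmod (g t - t f') < iv n" using X_approx[OF g] ivp by blast
  then obtain F' where F': "\<And>n t. t \<in> S \<Longrightarrow> cmod (g t - t (F' n)) < iv n" by metis
  define F where "F n = inv Tc (F' n)" for n
  have bT: "bij Tc" using bijT unfolding Tc_def[abs_def] .
  have TF: "Tc (F n) = F' n" for n unfolding F_def using bT by (simp add: bij_is_surj surj_f_inv_f)
  define G where "G n = chk (F n)" for n
  have GX: "G n \<in> X" for n unfolding G_def by (rule chk_X)
  have LG: "Lc (G n) = chk (F' n)" for n unfolding G_def Lc_chk TF ..
  have diffb: "cmod (G n t - G m t) \<le> (iv n + iv m) / \<epsilon>" if t: "t \<in> S" for n m t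
  proof -
    have "\<forall>s\<in>S. cmod (Lc (\<lambda>t. G n t - G m t) s) \<le> iv n + iv m"
    proof
      fix s assume s: "s \<in> S"
      have "Lc (\<lambda>t. G n t - G m t) s = (s (F' n) - g s) + (g s - s (F' m))"
        unfolding Lc_diff LG using s by (simp add: chk_def)
      also have "cmod \<dots> \<le> cmod (s (F' n) - g s) + cmod (g s - s (F' m))" by (rule norm_triangle_ineq)
      also have "\<dots> \<le> iv n + iv m" using F'[OF s, of n] F'[OF s, of m]
        by (simp add: norm_minus_commute)
      finally show "cmod (Lc (\<lambda>t. G n t - G m t) s) \<le> iv n + iv m" .
    qed
    with \<epsilon>(2) X_diff[OF GX GX] t show ?thesis by blast
  qed
  have conv: "convergent (\<lambda>n. G n t)" for t
  proof (cases "t \<in> S")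
    case False
    then have "(\<lambda>n. G n t) = (\<lambda>n. 0)" using X_zero GX by auto
    then show ?thesis by (simp add: convergent_const)
  next
    case True
    have "Cauchy (\<lambda>n. G n t)"
    proof (rule CauchyI)
      fix e :: real assume e: "e > 0"
      obtain N where N: "inverse (real (Suc N)) < e * \<epsilon> / 2" using reals_Archimedean[of "e * \<epsilon> / 2"] e \<epsilon>(1) by auto
      show "\<exists>M. \<forall>m\<ge>M. \<forall>n\<ge>M. norm (G m t - G n t) < e"
      proof (intro exI allI impI)
        fix m n assume "N \<le> m" "N \<le> n"
        then have "iv m \<le> iv N" "iv n \<le> iv N" using ivm by blast+
        then have "iv m + iv n \<le> 2 * iv N" by simp
        also have "\<dots> < e * \<epsilon>" using N unfolding iv_def by simp
        finally have "(iv m + iv n) / \<epsilon> < e" using \<epsilon>(1) by (simp add: field_simps)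
        then show "norm (G m t - G n t) < e" using diffb[OF True, of m n] by simp
      qed
    qed
    then show ?thesis by (simp add: Cauchy_convergent_iff)
  qed
  define gs where "gs t = lim (\<lambda>n. G n t)" for t
  have lim: "(\<lambda>n. G n t) \<longlonglongrightarrow> gs t" for t unfolding gs_def using conv convergent_LIMSEQ_iff by blast
  have gb: "cmod (G n t - gs t) \<le> iv n / \<epsilon>" if t: "t \<in> S" for n t
  proof (rule le_lim0)
    have "(\<lambda>m. G m t - gs t) \<longlonglongrightarrow> 0" using lim[of t] by (rule LIM_zero)
    then have "(\<lambda>m. cmod (G m t - gs t)) \<longlonglongrightarrow> 0" by (rule tendsto_norm_zero)
    then have "(\<lambda>m. iv m / \<epsilon> + cmod (G m t - gs t)) \<longlonglongrightarrow> 0 / \<epsilon> + 0"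
      by (intro tendsto_add tendsto_divide iv0 tendsto_const) (use \<epsilon> in auto)
    then show "(\<lambda>m. iv m / \<epsilon> + cmod (G m t - gs t)) \<longlonglongrightarrow> 0" by simp
    fix m
    have "cmod (G n t - gs t) \<le> cmod (G n t - G m t) + cmod (G m t - gs t)" by (rule norm_diff_triangle_ineq[of "G n t" "G m t" "G m t" "gs t", simplified])
    also have "\<dots> \<le> (iv n + iv m) / \<epsilon> + cmod (G m t - gs t)" using diffb[OF t] by simp
    finally show "cmod (G n t - gs t) \<le> iv n / \<epsilon> + (iv m / \<epsilon> + cmod (G m t - gs t))"
      by (simp add: add_divide_distrib)
  qed
  have gsX: "gs \<in> X"
  proof (rule X_intro)
    fix t assume "t \<notin> S"
    then have "(\<lambda>n. G n t) = (\<lambda>n. 0)" using X_zero GX by auto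
    then show "gs t = 0" using lim[of t] by (metis LIMSEQ_unique tendsto_const)
  next
    fix e :: real assume e: "e > 0"
    obtain N where N: "inverse (real (Suc N)) < e * \<epsilon>" using reals_Archimedean[of "e * \<epsilon>"] e \<epsilon>(1) by auto
    show "\<exists>f. \<forall>t\<in>S. cmod (gs t - t f) < e"
    proof (intro exI ballI)
      fix t assume t: "t \<in> S"
      have "cmod (gs t - t (F N)) = cmod (G N t - gs t)" using t by (simp add: G_def chk_def norm_minus_commute)
      also have "\<dots> \<le> iv N / \<epsilon>" by (rule gb[OF t])
      also have "\<dots> < (e * \<epsilon>) / \<epsilon>" using N \<epsilon>(1) unfolding iv_def by (intro divide_strict_right_mono) auto
      also have "\<dots> = e" using \<epsilon>(1) by simp
      finally show "cmod (gs t - t (F N)) < e" .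
    qed
  qed
  have "Lc gs = g"
  proof
    fix t
    show "Lc gs t = g t"
    proof (cases "t \<in> S")
      case False
      then have "(\<lambda>n. G n t) = (\<lambda>n. 0)" using X_zero GX by auto
      then have "gs t = 0" using lim[of t] by (metis LIMSEQ_unique tendsto_const)
      then show ?thesis using False X_zero[OF g False] by (simp add: Lc_def check_op_def)
    next
      case True
      have "(\<lambda>n. t (F' n) - g t) \<longlonglongrightarrow> 0"
      proof (rule Lim_null_comparison[OF always_eventually iv0])
        show "\<forall>n. norm (t (F' n) - g t) \<le> iv n" using F'[OF True] by (simp add: norm_minus_commute less_imp_le)
      qed
      then have s1: "(\<lambda>n. Lc (G n) t) \<longlonglongrightarrow> g t" unfolding LG using True
        by (simp add: chk_def LIM_zero_iff)
      have "(\<lambda>n. t w * G n (t \<circ> U) - c * G n t) \<longlonglongrightarrow> t w * gs (t \<circ> U) - c * gs t"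
        by (intro tendsto_diff tendsto_mult tendsto_const lim)
      then have s2: "(\<lambda>n. Lc (G n) t) \<longlonglongrightarrow> Lc gs t"
        using True by (simp add: Lc_def check_op_def)
      show ?thesis using LIMSEQ_unique[OF s2 s1] .
    qed
  qed
  with gsX show ?thesis by blast
qed

lemma Lc_bij: "bij_betw Lc X X"
  unfolding bij_betw_def using Lc_inj Lc_X Lc_surj by blast

end

theorem proposition2:
  fixes j w :: "'a::{real_normed_algebra_1,banach,comm_ring_1}" and U :: "'a \<Rightarrow> 'a"
  assumes "complex_banach_algebra j"
    and "semisimple TYPE('a)"
    and "alg_automorphism j U"
  shows "fun_spectrum (check_algebra j) (check_op j w U)
           - fun_ap_spectrum (shilov_boundary j) (check_algebra j) (check_op j w U)
         \<subseteq> alg_spectrum j (\<lambda>f. w * U f)"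
proof
  fix c assume c: "c \<in> fun_spectrum (check_algebra j) (check_op j w U)
           - fun_ap_spectrum (shilov_boundary j) (check_algebra j) (check_op j w U)"
  show "c \<in> alg_spectrum j (\<lambda>f. w * U f)"
  proof (rule ccontr)
    assume "c \<notin> alg_spectrum j (\<lambda>f. w * U f)"
    then have b: "bij (\<lambda>f. w * U f - cscale j c f)" unfolding alg_spectrum_def by simp
    interpret mainloc j w U c
      using assms b c by unfold_locales auto
    have "bij_betw Lc (check_algebra j) (check_algebra j)" by (rule Lc_bij)
    moreover have "\<not> bij_betw (\<lambda>g t. check_op j w U g t - c * g t) (check_algebra j) (check_algebra j)"
      using c unfolding fun_spectrum_def by simp
    ultimately show False unfolding Lc_def[abs_def] by simp
  qed
qed

end
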